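(* Let $\omega$ be a primitive third root of unity, $S=\mathbb{C}\langle x,y,z\rangle/(x^2,y^2,z^2)$, and for $t\in\mathbb{C}^*$ let $T_t$ be the quotient of $S$ by the two-sided ideal generated by $(zxy+\omega xyz+\omega^2 yzx)+t(yxz+\omega zyx+\omega^2 xzy)$ and $(zxy+\omega^2 xyz+\omega yzx)+t(yxz+\omega^2 zyx+\omega xzy)$. Let $n\ge 2$ and let $\lambda$ be a primitive $n$th root of unity. Then the PI-degree of $T_{-\lambda}$ is $2n$.
   Context: For an algebra $A$ that is a finite module over its center (a prime PI algebra), the PI-degree is the maximal dimension of a simple (finite-dimensional) representation, equivalently the generic rank $m$ such that $A$ embeds in $m\times m$ matrices over a commutative ring and satisfies the standard identity of $M_m$. *)

theory Defs
  imports Complex_Main "Jordan_Normal_Form.Matrix"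
begin

text \<open>Noncommutative polynomials in the letters x = 0, y = 1, z = 2 are written as
  formal linear combinations of words: lists of (coefficient, word) pairs.\<close>

type_synonym ncpoly = "(complex \<times> nat list) list"

definition word_eval :: "nat \<Rightarrow> (nat \<Rightarrow> complex mat) \<Rightarrow> nat list \<Rightarrow> complex mat" where
  "word_eval m A w = foldr (\<lambda>i M. A i * M) w (1\<^sub>m m)"

definition nc_eval :: "nat \<Rightarrow> (nat \<Rightarrow> complex mat) \<Rightarrow> ncpoly \<Rightarrow> complex mat" where
  "nc_eval m A p = foldr (\<lambda>(c, w) M. c \<cdot>\<^sub>m word_eval m A w + M) p (0\<^sub>m m m)"

definition S_rels :: "ncpoly list" where
  "S_rels = [[(1, [0,0])], [(1, [1,1])], [(1, [2,2])]]"

definition T_rel1 :: "complex \<Rightarrow> complex \<Rightarrow> ncpoly" where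
  "T_rel1 \<omega> t = [(1, [2,0,1]), (\<omega>, [0,1,2]), (\<omega>^2, [1,2,0]),
                   (t, [1,0,2]), (t * \<omega>, [2,1,0]), (t * \<omega>^2, [0,2,1])]"

definition T_rel2 :: "complex \<Rightarrow> complex \<Rightarrow> ncpoly" where
  "T_rel2 \<omega> t = [(1, [2,0,1]), (\<omega>^2, [0,1,2]), (\<omega>, [1,2,0]),
                   (t, [1,0,2]), (t * \<omega>^2, [2,1,0]), (t * \<omega>, [0,2,1])]"

definition T_rels :: "complex \<Rightarrow> complex \<Rightarrow> ncpoly list" where
  "T_rels \<omega> t = S_rels @ [T_rel1 \<omega> t, T_rel2 \<omega> t]"

text \<open>An m-dimensional representation of T_t = C<x,y,z>/(relations): by the universal
  property of the presented algebra, this is an assignment of m x m complex matrices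
  A 0, A 1, A 2 to x, y, z that kills every defining relation.\<close>
definition T_rep :: "complex \<Rightarrow> complex \<Rightarrow> nat \<Rightarrow> (nat \<Rightarrow> complex mat) \<Rightarrow> bool" where
  "T_rep \<omega> t m A \<longleftrightarrow> (\<forall>i<3. A i \<in> carrier_mat m m) \<and>
                       (\<forall>r\<in>set (T_rels \<omega> t). nc_eval m A r = 0\<^sub>m m m)"

definition is_subspace :: "nat \<Rightarrow> complex vec set \<Rightarrow> bool" where
  "is_subspace m V \<longleftrightarrow> V \<subseteq> carrier_vec m \<and> 0\<^sub>v m \<in> V \<and>
     (\<forall>u\<in>V. \<forall>v\<in>V. u + v \<in> V) \<and> (\<forall>c. \<forall>u\<in>V. c \<cdot>\<^sub>v u \<in> V)"

definition simple_rep :: "nat \<Rightarrow> (nat \<Rightarrow> complex mat) \<Rightarrow> bool" where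
  "simple_rep m A \<longleftrightarrow> 0 < m \<and>
     (\<forall>V. is_subspace m V \<and> (\<forall>i<3. \<forall>v\<in>V. A i *\<^sub>v v \<in> V) \<longrightarrow>
          V = {0\<^sub>v m} \<or> V = carrier_vec m)"

definition T_PI_degree :: "complex \<Rightarrow> complex \<Rightarrow> nat" where
  "T_PI_degree \<omega> t = (GREATEST m. \<exists>A. T_rep \<omega> t m A \<and> simple_rep m A)"

end

theory Submission
  imports Defs "HOL-Library.Function_Algebras" "Jordan_Normal_Form.Spectral_Radius"
begin


definition Fm :: "nat \<Rightarrow> (nat \<Rightarrow> complex) set" where "Fm m = {f. \<forall>i\<ge>m. f i = 0}"
definition scl :: "complex \<Rightarrow> (nat \<Rightarrow> complex) \<Rightarrow> nat \<Rightarrow> complex" where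
  "scl c f = (\<lambda>i. c * f i)"
definition linop :: "((nat \<Rightarrow> complex) \<Rightarrow> nat \<Rightarrow> complex) \<Rightarrow> bool" where
  "linop C \<longleftrightarrow> (\<forall>f g. C (f + g) = C f + C g) \<and> (\<forall>c f. C (scl c f) = scl c (C f))"
definition opm :: "nat \<Rightarrow> complex mat \<Rightarrow> (nat \<Rightarrow> complex) \<Rightarrow> nat \<Rightarrow> complex" where
  "opm m A f = (\<lambda>i. if i < m then (\<Sum>j<m. A $$ (i,j) * f j) else 0)"
definition restr :: "nat \<Rightarrow> (nat \<Rightarrow> complex) \<Rightarrow> nat \<Rightarrow> complex" where
  "restr m f = (\<lambda>i. if i < m then f i else 0)"

lemma opm_mult:
  assumes "A \<in> carrier_mat m m" "B \<in> carrier_mat m m"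
  shows "opm m (A * B) f = opm m A (opm m B f)"
proof (rule ext)
  fix i
  show "opm m (A * B) f i = opm m A (opm m B f) i"
  proof (cases "i < m")
    case True
    have "opm m (A * B) f i = (\<Sum>j<m. (\<Sum>k<m. A $$ (i,k) * B $$ (k,j)) * f j)"
      using True assms by (simp add: opm_def scalar_prod_def lessThan_atLeast0)
    also have "\<dots> = (\<Sum>k<m. A $$ (i,k) * (\<Sum>j<m. B $$ (k,j) * f j))"
      by (simp add: sum_distrib_left sum_distrib_right mult.assoc,
          rule sum.swap)
    also have "\<dots> = opm m A (opm m B f) i"
      using True by (simp add: opm_def)
    finally show ?thesis .
  qed (simp add: opm_def)
qed

lemma opm_add:
  assumes "A \<in> carrier_mat m m" "B \<in> carrier_mat m m"
  shows "opm m (A + B) f = opm m A f + opm m B f"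
  using assms by (auto simp: opm_def fun_eq_iff distrib_right sum.distrib)

lemma opm_smult:
  assumes "A \<in> carrier_mat m m"
  shows "opm m (c \<cdot>\<^sub>m A) f = scl c (opm m A f)"
  using assms by (auto simp: opm_def fun_eq_iff scl_def sum_distrib_left mult.assoc)

lemma opm_zero: "opm m (0\<^sub>m m m) f = 0"
  by (auto simp: opm_def fun_eq_iff)

lemma opm_one: "opm m (1\<^sub>m m) f = restr m f"
proof -
  have "\<And>i. i < m \<Longrightarrow> (\<Sum>j<m. (1\<^sub>m m :: complex mat) $$ (i,j) * f j) = f i"
  proof -
    fix i assume i: "i < m"
    have "(\<Sum>j<m. (1\<^sub>m m :: complex mat) $$ (i,j) * f j) = (\<Sum>j<m. if j = i then f i else 0)"
      by (rule sum.cong, auto simp: i)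
    also have "\<dots> = f i" using i by simp
    finally show "(\<Sum>j<m. (1\<^sub>m m :: complex mat) $$ (i,j) * f j) = f i" .
  qed
  thus ?thesis by (auto simp: opm_def restr_def fun_eq_iff)
qed

lemma opm_restr[simp]: "opm m A (restr m f) = opm m A f"
  by (auto simp: opm_def restr_def fun_eq_iff)

lemma opm_add_fun: "opm m A (f + g) = opm m A f + opm m A g"
  by (simp add: opm_def fun_eq_iff distrib_left sum.distrib)

lemma opm_scl_fun: "opm m A (scl c f) = scl c (opm m A f)"
proof -
  have "\<And>i. (\<Sum>j<m. A $$ (i, j) * (c * f j)) = c * (\<Sum>j<m. A $$ (i, j) * f j)"
    by (simp add: sum_distrib_left algebra_simps)
  thus ?thesis by (simp add: opm_def fun_eq_iff scl_def)
qed

lemma opm_lin: "linop (opm m A)"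
  unfolding linop_def using opm_add_fun opm_scl_fun by blast

lemma opm_Fm: "opm m A f \<in> Fm m"
  by (auto simp: opm_def Fm_def)

lemma opm_zero_mat:
  assumes "A \<in> carrier_mat m m" "\<And>f. opm m A f = 0"
  shows "A = 0\<^sub>m m m"
proof (rule eq_matI)
  fix i j assume ij: "i < dim_row (0\<^sub>m m m :: complex mat)" "j < dim_col (0\<^sub>m m m :: complex mat)"
  have "opm m A (\<lambda>k. if k = j then 1 else 0) i = 0" using assms(2) by simp
  moreover have "opm m A (\<lambda>k. if k = j then 1 else 0) i = A $$ (i,j)"
    using ij by (simp add: opm_def if_distrib cong: if_cong)
  ultimately show "A $$ (i,j) = 0\<^sub>m m m $$ (i,j)" using ij by simp
qed (use assms in auto)


lemma scl_apply[simp]: "scl c f i = c * f i" by (simp add: scl_def)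
lemma scl_0_fun[simp]: "scl c 0 = 0" by (simp add: fun_eq_iff)
lemma scl_0[simp]: "scl 0 f = 0" by (simp add: fun_eq_iff)
lemma scl_1[simp]: "scl 1 f = f" by (simp add: fun_eq_iff)
lemma scl_scl[simp]: "scl c (scl d f) = scl (c * d) f" by (simp add: fun_eq_iff)
lemma scl_add: "scl c (f + g) = scl c f + scl c g" by (simp add: fun_eq_iff algebra_simps)

lemma linop_add: "linop C \<Longrightarrow> C (f + g) = C f + C g" by (simp add: linop_def)
lemma linop_scl: "linop C \<Longrightarrow> C (scl c f) = scl c (C f)" by (simp add: linop_def)
lemma linop_zero: "linop C \<Longrightarrow> C 0 = 0"
  by (metis linop_scl scl_0 scl_0_fun)
lemma linop_diff: "linop C \<Longrightarrow> C (f - g) = C f - C g"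
  by (metis add_diff_cancel_right' diff_add_cancel linop_add)
lemma linop_uminus: "linop C \<Longrightarrow> C (- f) = - C f"
  by (metis diff_0 linop_diff linop_zero)
lemma linop_sum: "linop C \<Longrightarrow> C (\<Sum>k\<in>S. h k) = (\<Sum>k\<in>S. C (h k))"
  by (induct S rule: infinite_finite_induct) (auto simp: linop_zero linop_add)
lemma linop_comp: "linop A \<Longrightarrow> linop B \<Longrightarrow> linop (\<lambda>f. A (B f))"
  by (simp add: linop_def)
lemma linop_plus: "linop A \<Longrightarrow> linop B \<Longrightarrow> linop (\<lambda>f. A f + B f)"
  by (simp add: linop_def scl_add)
lemma linop_sclop: "linop A \<Longrightarrow> linop (\<lambda>f. scl c (A f))"
  by (simp add: linop_def scl_add mult.commute)
lemma linop_minus: "linop A \<Longrightarrow> linop B \<Longrightarrow> linop (\<lambda>f. A f - B f)"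
  by (simp add: linop_def fun_eq_iff algebra_simps)
lemma linop_funpow: "linop A \<Longrightarrow> linop (A ^^ k)"
  by (induct k) (auto simp: linop_def)

lemma Fm_0[simp]: "0 \<in> Fm m" by (simp add: Fm_def)
lemma Fm_add: "f \<in> Fm m \<Longrightarrow> g \<in> Fm m \<Longrightarrow> f + g \<in> Fm m" by (simp add: Fm_def)
lemma Fm_diff: "f \<in> Fm m \<Longrightarrow> g \<in> Fm m \<Longrightarrow> f - g \<in> Fm m" by (simp add: Fm_def)
lemma Fm_scl: "f \<in> Fm m \<Longrightarrow> scl c f \<in> Fm m" by (simp add: Fm_def)
lemma Fm_sum: "(\<And>k. k \<in> S \<Longrightarrow> h k \<in> Fm m) \<Longrightarrow> (\<Sum>k\<in>S. h k) \<in> Fm m"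
  by (induct S rule: infinite_finite_induct) (auto simp: Fm_add)

lemma pow_twist:
  assumes "linop A" "linop B" "\<And>f. A (B f) = scl c (B (A f))"
  shows "A ((B ^^ k) f) = scl (c ^ k) ((B ^^ k) (A f))"
proof (induct k)
  case (Suc k)
  have "A ((B ^^ Suc k) f) = A (B ((B ^^ k) f))" by simp
  also have "\<dots> = scl c (B (A ((B ^^ k) f)))" by (rule assms(3))
  also have "\<dots> = scl c (B (scl (c ^ k) ((B ^^ k) (A f))))" by (simp only: Suc)
  also have "\<dots> = scl (c ^ Suc k) ((B ^^ Suc k) (A f))"
    by (simp add: linop_scl[OF assms(2)] mult.commute)
  finally show ?case .
qed simp

lemma funpow_Fm:
  fixes B :: "(nat \<Rightarrow> complex) \<Rightarrow> nat \<Rightarrow> complex"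
  assumes a: "\<And>f. B f \<in> Fm m" and k: "0 < k"
  shows "(B ^^ k) f \<in> Fm m"
proof -
  obtain j where "k = Suc j" using k by (cases k) auto
  thus ?thesis using a by simp
qed

definition subsp :: "nat \<Rightarrow> (nat \<Rightarrow> complex) set \<Rightarrow> bool" where
  "subsp m W \<longleftrightarrow> W \<subseteq> Fm m \<and> 0 \<in> W \<and> (\<forall>f\<in>W. \<forall>g\<in>W. f + g \<in> W) \<and> (\<forall>c. \<forall>f\<in>W. scl c f \<in> W)"

definition lc :: "(nat \<Rightarrow> complex) \<Rightarrow> (nat \<Rightarrow> complex) list \<Rightarrow> nat \<Rightarrow> complex" where
  "lc c gs = (\<Sum>k<length gs. scl (c k) (gs ! k))"

locale trirep =
  fixes m n :: nat and la :: complex and X Y Z :: "(nat \<Rightarrow> complex) \<Rightarrow> nat \<Rightarrow> complex"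
  assumes linX: "linop X" and linY: "linop Y" and linZ: "linop Z"
  and FX: "\<And>f. X f \<in> Fm m" and FY: "\<And>f. Y f \<in> Fm m" and FZ: "\<And>f. Z f \<in> Fm m"
  and sqX: "\<And>f. X (X f) = 0" and sqY: "\<And>f. Y (Y f) = 0" and sqZ: "\<And>f. Z (Z f) = 0"
  and Rz: "\<And>f. Z (X (Y f) + scl la (Y (X f))) = X (Y (Z f)) + scl la (Y (X (Z f)))"
  and Rx: "\<And>f. X (Y (Z f) + scl la (Z (Y f))) = Y (Z (X f)) + scl la (Z (Y (X f)))"
  and Ry: "\<And>f. Y (Z (X f) + scl la (X (Z f))) = Z (X (Y f)) + scl la (X (Z (Y f)))"
  and lan: "la ^ n = 1" and prim: "\<And>k. 0 < k \<Longrightarrow> k < n \<Longrightarrow> la ^ k \<noteq> 1" and npos: "0 < n"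
  and mpos: "0 < m"
  and simple: "\<And>W. subsp m W \<Longrightarrow> (\<forall>f\<in>W. X f \<in> W \<and> Y f \<in> W \<and> Z f \<in> W) \<Longrightarrow> W = {0} \<or> W = Fm m"
  and eig: "\<And>C. linop C \<Longrightarrow> (\<And>f. C f \<in> Fm m) \<Longrightarrow> \<exists>c g. g \<in> Fm m \<and> g \<noteq> 0 \<and> C g = scl c g"
  and dimb: "\<And>gs. (\<forall>f\<in>Fm m. \<exists>c. f = lc c gs) \<Longrightarrow> m \<le> length gs"
begin

lemmas linXs[simp] = linop_add[OF linX] linop_scl[OF linX] linop_zero[OF linX] linop_diff[OF linX]
lemmas linYs[simp] = linop_add[OF linY] linop_scl[OF linY] linop_zero[OF linY] linop_diff[OF linY]
lemmas linZs[simp] = linop_add[OF linZ] linop_scl[OF linZ] linop_zero[OF linZ] linop_diff[OF linZ]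
lemmas sqs[simp] = sqX sqY sqZ

lemma la_nz: "la \<noteq> 0"
proof
  assume "la = 0" then show False using lan npos by (simp add: power_0_left)
qed

definition "M f = X (Y f) + scl la (Y (X f))"
definition "N f = Y (Z f) + scl la (Z (Y f))"
definition "L f = Z (X f) + scl la (X (Z f))"
definition "K f = Y (Z (X f)) - scl la (X (Z (Y f)))"

lemma linM: "linop M" unfolding linop_def M_def by (simp add: scl_add fun_eq_iff algebra_simps)
lemma linN: "linop N" unfolding linop_def N_def by (simp add: scl_add fun_eq_iff algebra_simps)
lemma linL: "linop L" unfolding linop_def L_def by (simp add: scl_add fun_eq_iff algebra_simps)
lemma linK: "linop K" unfolding linop_def K_def by (simp add: scl_add fun_eq_iff algebra_simps)



lemma FM: "M f \<in> Fm m" unfolding M_def by (intro Fm_add Fm_scl FX FY FZ)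
lemma FN: "N f \<in> Fm m" unfolding N_def by (intro Fm_add Fm_scl FX FY FZ)
lemma FL: "L f \<in> Fm m" unfolding L_def by (intro Fm_add Fm_scl FX FY FZ)
lemma FK: "K f \<in> Fm m" unfolding K_def by (intro Fm_diff Fm_scl FX FY FZ)

lemma ZM: "Z (M f) = M (Z f)" using Rz by (simp add: M_def)
lemma XN: "X (N f) = N (X f)" using Rx by (simp add: N_def)
lemma YL: "Y (L f) = L (Y f)" using Ry by (simp add: L_def)
lemma XM: "X (M f) = scl la (M (X f))" by (simp add: M_def)
lemma MY: "M (Y f) = scl la (Y (M f))" by (simp add: M_def)
lemma YN: "Y (N f) = scl la (N (Y f))" by (simp add: N_def)
lemma NZ: "N (Z f) = scl la (Z (N f))" by (simp add: N_def)
lemma ZL: "Z (L f) = scl la (L (Z f))" by (simp add: L_def)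
lemma LX: "L (X f) = scl la (X (L f))" by (simp add: L_def)

lemma XK: "X (K f) = K (X f)"
proof -
  have "X (N (X f)) = N (X (X f))" by (rule XN)
  hence h: "X (Y (Z (X f))) + scl la (X (Z (Y (X f)))) = 0" by (simp add: N_def)
  show ?thesis unfolding K_def using h by (simp add: fun_eq_iff) (metis add_eq_0_iff2 fun_cong)
qed


lemma YK: "Y (K f) = K (Y f)"
proof -
  have h: "\<And>i. Y (Z (X (Y f))) i + la * Y (X (Z (Y f))) i = 0"
    using fun_cong[OF YL[of "Y f"]] by (simp add: L_def)
  show ?thesis unfolding K_def
  proof (rule ext)
    fix i show "Y (Y (Z (X f)) - scl la (X (Z (Y f)))) i = (Y (Z (X (Y f))) - scl la (X (Z (Y (Y f))))) i"
      using h[of i] by (simp add: algebra_simps) (metis add_eq_0_iff2 mult_minus_left)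
  qed
qed

lemma ZK: "Z (K f) = K (Z f)"
proof -
  have h1: "\<And>i. Z (X (Y (Z f))) i + la * Z (X (Z (Y f))) i = Z (Y (Z (X f))) i"
    using fun_cong[OF arg_cong[OF XN[of f], of Z]] by (simp add: N_def)
  have h2: "\<And>i. Y (Z (X (Z f))) i = Z (X (Y (Z f))) i + la * X (Z (Y (Z f))) i"
    using fun_cong[OF YL[of "Z f"]] by (simp add: L_def)
  show ?thesis unfolding K_def
  proof (rule ext)
    fix i show "Z (Y (Z (X f)) - scl la (X (Z (Y f)))) i = (Y (Z (X (Z f))) - scl la (X (Z (Y (Z f))))) i"
      using h1[of i] h2[of i] by simp (metis add_diff_cancel_right')
  qed
qed

lemma YM': "Y (M f) = scl (inverse la) (M (Y f))"
  using MY[of f] la_nz by simp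
lemma ZN': "Z (N f) = scl (inverse la) (N (Z f))"
  using NZ[of f] la_nz by simp
lemma XL': "X (L f) = scl (inverse la) (L (X f))"
  using LX[of f] la_nz by simp

lemma inv_la_pow: "inverse la ^ n = 1" using lan by (simp add: power_inverse)

lemma schur:
  assumes C: "linop C" "\<And>f. C f \<in> Fm m" and cx: "\<And>f. X (C f) = C (X f)"
    and cy: "\<And>f. Y (C f) = C (Y f)" and cz: "\<And>f. Z (C f) = C (Z f)"
  shows "\<exists>c. \<forall>f\<in>Fm m. C f = scl c f"
proof -
  obtain c g where g: "g \<in> Fm m" "g \<noteq> 0" "C g = scl c g" using eig[OF C] by blast
  define W where "W = {f \<in> Fm m. C f = scl c f}"
  have "subsp m W" unfolding subsp_def W_def
    by (auto simp: linop_zero[OF C(1)] linop_add[OF C(1)] linop_scl[OF C(1)] Fm_add Fm_scl scl_add mult.commute)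
  moreover have "\<forall>f\<in>W. X f \<in> W \<and> Y f \<in> W \<and> Z f \<in> W"
    unfolding W_def by (auto simp: FX FY FZ simp flip: cx cy cz)
  ultimately have "W = {0} \<or> W = Fm m" by (rule simple)
  moreover have "g \<in> W" using g W_def by auto
  ultimately have "W = Fm m" using g by auto
  thus ?thesis unfolding W_def by auto
qed

lemma normal_dich:
  assumes C: "linop C" "\<And>f. C f \<in> Fm m" and cx: "\<And>f. C (X f) = scl a (X (C f))"
    and cy: "\<And>f. C (Y f) = scl b (Y (C f))" and cz: "\<And>f. C (Z f) = scl c (Z (C f))"
  shows "(\<forall>f\<in>Fm m. C f = 0) \<or> (\<forall>f\<in>Fm m. C f = 0 \<longrightarrow> f = 0)"
proof -
  define W where "W = {f \<in> Fm m. C f = 0}"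
  have "subsp m W" unfolding subsp_def W_def
    by (auto simp: linop_zero[OF C(1)] linop_add[OF C(1)] linop_scl[OF C(1)] Fm_add Fm_scl)
  moreover have "\<forall>f\<in>W. X f \<in> W \<and> Y f \<in> W \<and> Z f \<in> W"
    unfolding W_def by (auto simp: FX FY FZ cx cy cz)
  ultimately have "W = {0} \<or> W = Fm m" by (rule simple)
  thus ?thesis unfolding W_def by auto
qed

lemma central_pow:
  assumes "linop B" "\<And>f. B f \<in> Fm m"
    "\<And>f. X (B f) = scl a (B (X f))" "\<And>f. Y (B f) = scl b (B (Y f))" "\<And>f. Z (B f) = scl c (B (Z f))"
    "a ^ n = 1" "b ^ n = 1" "c ^ n = 1"
  shows "\<exists>mu. \<forall>f\<in>Fm m. (B ^^ n) f = scl mu f"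
proof (rule schur)
  show "linop (B ^^ n)" by (rule linop_funpow[OF assms(1)])
  show "\<And>f. (B ^^ n) f \<in> Fm m" by (rule funpow_Fm[OF assms(2) npos])
  show "\<And>f. X ((B ^^ n) f) = (B ^^ n) (X f)" using pow_twist[OF linX assms(1) assms(3)] assms(6) by simp
  show "\<And>f. Y ((B ^^ n) f) = (B ^^ n) (Y f)" using pow_twist[OF linY assms(1) assms(4)] assms(7) by simp
  show "\<And>f. Z ((B ^^ n) f) = (B ^^ n) (Z f)" using pow_twist[OF linZ assms(1) assms(5)] assms(8) by simp
qed

lemma ZM1: "Z (M f) = scl 1 (M (Z f))" using ZM by simp
lemma XN1: "X (N f) = scl 1 (N (X f))" using XN by simp
lemma YL1: "Y (L f) = scl 1 (L (Y f))" using YL by simp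

lemma M_central: "\<exists>mu. \<forall>f\<in>Fm m. (M ^^ n) f = scl mu f"
  by (rule central_pow[OF linM FM XM YM' ZM1 lan inv_la_pow]) simp
lemma N_central: "\<exists>mu. \<forall>f\<in>Fm m. (N ^^ n) f = scl mu f"
  by (rule central_pow[OF linN FN XN1 YN ZN' _ lan inv_la_pow]) simp
lemma L_central: "\<exists>mu. \<forall>f\<in>Fm m. (L ^^ n) f = scl mu f"
  by (rule central_pow[OF linL FL XL' YL1 ZL inv_la_pow _ lan]) simp
lemma K_central: "\<exists>k. \<forall>f\<in>Fm m. K f = scl k f"
  by (rule schur[OF linK FK]) (simp_all add: XK YK ZK)

lemma M_dich: "(\<forall>f\<in>Fm m. M f = 0) \<or> (\<forall>f\<in>Fm m. M f = 0 \<longrightarrow> f = 0)"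
proof (rule normal_dich[OF linM FM])
  show "\<And>f. M (X f) = scl (inverse la) (X (M f))" using XM la_nz by simp
  show "\<And>f. M (Y f) = scl la (Y (M f))" by (rule MY)
  show "\<And>f. M (Z f) = scl 1 (Z (M f))" using ZM by simp
qed
lemma L_dich: "(\<forall>f\<in>Fm m. L f = 0) \<or> (\<forall>f\<in>Fm m. L f = 0 \<longrightarrow> f = 0)"
proof (rule normal_dich[OF linL FL])
  show "\<And>f. L (X f) = scl la (X (L f))" by (rule LX)
  show "\<And>f. L (Y f) = scl 1 (Y (L f))" using YL by simp
  show "\<And>f. L (Z f) = scl (inverse la) (Z (L f))" using ZL la_nz by simp
qed

end


lemma fsum_apply: "(\<Sum>k\<in>S. h k) i = (\<Sum>k\<in>S. h k i)"
  by (induct S rule: infinite_finite_induct) auto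

definition spn :: "(nat \<Rightarrow> complex) list \<Rightarrow> (nat \<Rightarrow> complex) set" where
  "spn gs = range (\<lambda>c. lc c gs)"

lemma lc_add: "lc c gs + lc d gs = lc (\<lambda>k. c k + d k) gs"
  by (simp add: lc_def fun_eq_iff fsum_apply sum.distrib distrib_right)
lemma lc_scl: "scl a (lc c gs) = lc (\<lambda>k. a * c k) gs"
  by (simp add: lc_def fun_eq_iff fsum_apply sum_distrib_left mult.assoc)
lemma spn_0: "0 \<in> spn gs"
proof -
  have "lc (\<lambda>k. 0) gs = 0" by (simp add: lc_def fun_eq_iff fsum_apply)
  thus ?thesis unfolding spn_def by (metis rangeI)
qed
lemma spn_add: "f \<in> spn gs \<Longrightarrow> g \<in> spn gs \<Longrightarrow> f + g \<in> spn gs"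
  unfolding spn_def by (auto simp: lc_add)
lemma spn_scl: "f \<in> spn gs \<Longrightarrow> scl a f \<in> spn gs"
  unfolding spn_def by (auto simp: lc_scl)
lemma spn_diff: "f \<in> spn gs \<Longrightarrow> g \<in> spn gs \<Longrightarrow> f - g \<in> spn gs"
proof -
  assume "f \<in> spn gs" "g \<in> spn gs"
  hence "f + scl (-1) g \<in> spn gs" by (intro spn_add spn_scl)
  moreover have "f + scl (-1) g = f - g" by (simp add: fun_eq_iff)
  ultimately show ?thesis by simp
qed
lemma spn_sum: "(\<And>k. k \<in> S \<Longrightarrow> h k \<in> spn gs) \<Longrightarrow> (\<Sum>k\<in>S. h k) \<in> spn gs"
  by (induct S rule: infinite_finite_induct) (auto simp: spn_0 spn_add)
lemma spn_gen: "g \<in> set gs \<Longrightarrow> g \<in> spn gs"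
proof -
  assume "g \<in> set gs"
  then obtain k where k: "k < length gs" "gs ! k = g" by (auto simp: in_set_conv_nth)
  have "lc (\<lambda>j. if j = k then 1 else 0) gs = g"
  proof (rule ext)
    fix i
    have "lc (\<lambda>j. if j = k then 1 else 0) gs i = (\<Sum>j<length gs. if j = k then (gs ! k) i else 0)"
      unfolding lc_def fsum_apply by (rule sum.cong) auto
    also have "\<dots> = g i" using k by simp
    finally show "lc (\<lambda>j. if j = k then 1 else 0) gs i = g i" .
  qed
  thus ?thesis unfolding spn_def by (metis rangeI)
qed
lemma spn_Fm: "set gs \<subseteq> Fm m \<Longrightarrow> spn gs \<subseteq> Fm m"
  unfolding spn_def lc_def by (auto intro!: Fm_sum Fm_scl)
lemma span_inv:
  assumes "linop F" "\<forall>g\<in>set gs. F g \<in> spn gs" "f \<in> spn gs"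
  shows "F f \<in> spn gs"
proof -
  obtain c where f: "f = lc c gs" using assms(3) unfolding spn_def by auto
  have "F f = (\<Sum>k<length gs. scl (c k) (F (gs ! k)))"
    unfolding f lc_def by (simp add: linop_sum[OF assms(1)] linop_scl[OF assms(1)])
  also have "\<dots> \<in> spn gs" using assms(2) by (intro spn_sum spn_scl) auto
  finally show ?thesis .
qed

lemma root_sum:
  fixes la :: complex
  assumes "la ^ n = 1" "\<And>k. 0 < k \<Longrightarrow> k < n \<Longrightarrow> la ^ k \<noteq> 1" "0 < n"
  shows "(\<Sum>i<n. la ^ (d * i)) = (if n dvd d then of_nat n else 0)"
proof (cases "n dvd d")
  case True
  then obtain q where d: "d = n * q" by auto
  have "\<And>i. la ^ (d * i) = 1" unfolding d by (simp add: power_mult assms(1))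
  thus ?thesis using True by simp
next
  case False
  define r where "r = la ^ d"
  have "la ^ d = la ^ (n * (d div n) + d mod n)" by simp
  also have "\<dots> = (la ^ n) ^ (d div n) * la ^ (d mod n)" by (simp only: power_add power_mult)
  finally have "la ^ d = la ^ (d mod n)" using assms(1) by simp
  moreover have "0 < d mod n" "d mod n < n" using False assms(3) by (auto simp: dvd_eq_mod_eq_0)
  ultimately have r1: "r \<noteq> 1" using assms(2) r_def by auto
  have "r ^ n = (la ^ n) ^ d" unfolding r_def by (simp add: power_mult[symmetric] mult.commute)
  hence rn: "r ^ n = 1" using assms(1) by simp
  have "(\<Sum>i<n. la ^ (d * i)) = (\<Sum>i<n. r ^ i)" unfolding r_def by (simp add: power_mult)
  also have "\<dots> = (r ^ n - 1) / (r - 1)" using r1 by (rule geometric_sum)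
  also have "\<dots> = 0" using rn by simp
  finally show ?thesis using False by simp
qed

definition chainlist :: "(nat \<Rightarrow> nat \<Rightarrow> complex) \<Rightarrow> ((nat \<Rightarrow> complex) \<Rightarrow> nat \<Rightarrow> complex) \<Rightarrow> nat \<Rightarrow> (nat \<Rightarrow> complex) list" where
  "chainlist w Y n = map w [0..<n] @ map (\<lambda>j. Y (w j)) [0..<n]"

lemma chain_periodic:
  assumes "\<And>j. w (j + n) = scl p (w j)" "linop Y" "0 < n"
  shows "w j \<in> spn (chainlist w Y n) \<and> Y (w j) \<in> spn (chainlist w Y n)"
proof (induct j rule: less_induct)
  case (less j)
  show ?case
  proof (cases "j < n")
    case True
    thus ?thesis by (auto intro!: spn_gen simp: chainlist_def)
  next
    case False
    then obtain i where j: "j = i + n" by (metis add.commute le_add_diff_inverse not_less)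
    have "i < j" using j assms(3) by simp
    hence "w i \<in> spn (chainlist w Y n) \<and> Y (w i) \<in> spn (chainlist w Y n)" by (rule less)
    moreover have e1: "w j = scl p (w i)" unfolding j by (rule assms(1))
    moreover have "Y (w j) = scl p (Y (w i))" unfolding e1 by (rule linop_scl[OF assms(2)])
    ultimately show ?thesis by (metis spn_scl)
  qed
qed

lemma chain_set: "g \<in> set (chainlist w Y n) \<Longrightarrow> \<exists>j<n. g = w j \<or> g = Y (w j)"
  by (auto simp: chainlist_def)

lemma fourier_shift:
  fixes g :: complex
  assumes "a (Suc p) = g ^ Suc p * a 0"
  shows "(\<Sum>k<Suc p. g ^ (p - k) * a (Suc k)) = g * (\<Sum>k<Suc p. g ^ (p - k) * a k)"
proof -
  have "g * (\<Sum>k<Suc p. g ^ (p - k) * a k) = g * (g ^ p * a 0 + (\<Sum>k<p. g ^ (p - Suc k) * a (Suc k)))"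
    by (simp only: sum.lessThan_Suc_shift) simp
  also have "\<dots> = g ^ Suc p * a 0 + (\<Sum>k<p. g * g ^ (p - Suc k) * a (Suc k))"
    by (simp add: distrib_left sum_distrib_left mult.assoc)
  also have "(\<Sum>k<p. g * g ^ (p - Suc k) * a (Suc k)) = (\<Sum>k<p. g ^ (p - k) * a (Suc k))"
    by (rule sum.cong) (auto simp flip: power_Suc simp: Suc_diff_Suc)
  finally show ?thesis using assms by simp
qed

context trirep begin

lemma bound_by_list:
  assumes "set gs \<subseteq> Fm m" "\<exists>g\<in>set gs. g \<noteq> 0"
    "\<forall>g\<in>set gs. X g \<in> spn gs \<and> Y g \<in> spn gs \<and> Z g \<in> spn gs"
  shows "m \<le> length gs"
proof -
  have "subsp m (spn gs)" unfolding subsp_def using spn_Fm[OF assms(1)]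
    by (auto simp: spn_0 spn_add spn_scl)
  moreover have "\<forall>f\<in>spn gs. X f \<in> spn gs \<and> Y f \<in> spn gs \<and> Z f \<in> spn gs"
    using assms(3) by (auto intro: span_inv linX linY linZ)
  ultimately have "spn gs = {0} \<or> spn gs = Fm m" by (rule simple)
  moreover obtain g where "g \<in> set gs" "g \<noteq> 0" using assms(2) by auto
  ultimately have "spn gs = Fm m" using spn_gen by blast
  hence "\<forall>f\<in>Fm m. \<exists>c. f = lc c gs" unfolding spn_def by auto
  thus ?thesis by (rule dimb)
qed

lemma key1: "X w = 0 \<Longrightarrow> M w = scl g w \<Longrightarrow> X (Y w) = scl g w"
  by (simp add: M_def)

lemma key2:
  assumes kap: "\<forall>f\<in>Fm m. K f = scl ka f" and w: "w \<in> Fm m" "X w = 0" "M w = scl g w"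
  shows "scl g (Z w) = scl ka w + Y (L w)"
proof -
  have "scl g (Z w) = M (Z w)" using ZM[of w] w(3) by simp
  also have "\<dots> = X (Y (Z w)) + scl la (Y (X (Z w)))" by (simp add: M_def)
  also have "X (Y (Z w)) = scl ka w"
  proof -
    have "X (N w) = N (X w)" by (rule XN)
    hence h: "X (Y (Z w)) + scl la (X (Z (Y w))) = 0" using w(2) by (simp add: N_def)
    have "K w = scl ka w" using kap w(1) by simp
    hence "- scl la (X (Z (Y w))) = scl ka w" using w(2) by (simp add: K_def)
    thus ?thesis using h by (metis add_eq_0_iff2)
  qed
  also have "scl la (Y (X (Z w))) = Y (L w)" using w(2) by (simp add: L_def)
  finally show ?thesis .
qed

lemma key3: "X w = 0 \<Longrightarrow> X (L w) = 0"
  using XL'[of w] by (simp add: linop_zero[OF linL])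

lemma MLc: "M (L f) = scl (inverse la) (L (M f))"
proof -
  have "M (L f) = X (L (Y f)) + scl la (Y (X (L f)))" by (simp add: M_def YL)
  also have "\<dots> = scl (inverse la) (L (X (Y f))) + scl la (Y (scl (inverse la) (L (X f))))"
    by (simp only: XL')
  also have "\<dots> = scl (inverse la) (L (X (Y f))) + L (Y (X f))" using la_nz by (simp add: YL)
  also have "\<dots> = scl (inverse la) (L (M f))"
    using la_nz by (simp add: M_def linop_add[OF linL] linop_scl[OF linL] scl_add)
  finally show ?thesis .
qed

lemma MN: "M (N f) = scl la (N (M f))"
proof -
  have "M (N f) = X (Y (N f)) + scl la (Y (X (N f)))" by (simp add: M_def)
  also have "\<dots> = X (scl la (N (Y f))) + scl la (Y (N (X f)))" by (simp add: YN XN)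
  also have "\<dots> = scl la (N (X (Y f))) + scl la (scl la (N (Y (X f))))" by (simp add: XN YN)
  also have "\<dots> = scl la (N (M f))"
    by (simp add: M_def linop_add[OF linN] linop_scl[OF linN] scl_add)
  finally show ?thesis .
qed

lemma key4:
  assumes kap: "\<forall>f\<in>Fm m. K f = scl ka f" and w: "w \<in> Fm m" "X w = 0" "M w = scl g w"
  shows "scl g (N (L w)) = scl (- la * ka ^ 2) w"
proof -
  have k2: "scl g (Z w) = scl ka w + Y (L w)" by (rule key2[OF kap w])
  have s1: "L w = scl la (X (Z w))" using w(2) by (simp add: L_def)
  have s2: "N (L w) = scl (la * la) (X (Z (Y (Z w))))"
    unfolding s1 linop_scl[OF linN] XN[symmetric] by (simp add: N_def)
  have s4: "K (Z w) = scl ka (Z w)" using kap FZ by simp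
  hence s4': "\<And>i. Y (Z (X (Z w))) i - la * X (Z (Y (Z w))) i = ka * Z w i"
    by (simp add: K_def fun_eq_iff)
  have s5: "Y (Z (X (Z w))) = L (Y (Z w))" using YL[of "Z w"] by (simp add: L_def)
  have s6: "scl g (Y (Z w)) = scl ka (Y w)"
    using arg_cong[OF k2, of Y] by simp
  have s7: "scl g (L (Y (Z w))) = scl ka (Y (L w))"
    using arg_cong[OF s6, of L] by (simp add: linop_scl[OF linL] YL)
  show ?thesis
  proof (rule ext)
    fix i
    have a: "g * Z w i = ka * w i + Y (L w) i" using fun_cong[OF k2, of i] by simp
    have b: "g * L (Y (Z w)) i = ka * Y (L w) i" using fun_cong[OF s7, of i] by simp
    have c: "Y (Z (X (Z w))) i = L (Y (Z w)) i" using fun_cong[OF s5, of i] .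
    have d: "N (L w) i = la * la * X (Z (Y (Z w))) i" using fun_cong[OF s2, of i] by simp
    have e: "la * X (Z (Y (Z w))) i = L (Y (Z w)) i - ka * Z w i"
      using s4'[of i] c by (simp add: algebra_simps)
    have "g * N (L w) i = la * (g * (la * X (Z (Y (Z w))) i))" using d by (simp add: mult_ac)
    also have "\<dots> = la * (g * L (Y (Z w)) i - ka * (g * Z w i))" unfolding e by (simp add: algebra_simps)
    also have "\<dots> = la * (ka * Y (L w) i - ka * (ka * w i + Y (L w) i))" unfolding a b ..
    also have "\<dots> = - la * ka ^ 2 * w i" by (simp add: algebra_simps power2_eq_square)
    finally show "scl g (N (L w)) i = scl (- la * ka ^ 2) w i" by simp
  qed
qed

end


declare scl_apply[simp del]

lemma pow_inj:
  fixes C :: "(nat \<Rightarrow> complex) \<Rightarrow> nat \<Rightarrow> complex"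
  assumes "\<forall>f\<in>Fm m. C f = 0 \<longrightarrow> f = 0" "\<And>f. C f \<in> Fm m"
  shows "f \<in> Fm m \<Longrightarrow> (C ^^ k) f = 0 \<Longrightarrow> f = 0"
proof (induct k arbitrary: f)
  case (Suc k)
  have "(C ^^ k) (C f) = 0" using Suc(3) by (metis funpow_Suc_right comp_apply)
  hence "C f = 0" using Suc(1) assms(2) by blast
  thus ?case using assms(1) Suc(2) by blast
qed simp

lemma scl_solve: assumes "scl g f = h" "g \<noteq> 0" shows "f = scl (inverse g) h"
proof (rule ext)
  fix x have "g * f x = h x" using fun_cong[OF assms(1), of x] by (simp add: scl_apply)
  thus "f x = scl (inverse g) h x" using assms(2) by (simp add: field_simps scl_apply)
qed

lemma scl_zero_nz: "scl c v = 0 \<Longrightarrow> v \<noteq> 0 \<Longrightarrow> c = 0"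
  by (auto simp: fun_eq_iff scl_apply)

lemma chainlist_len: "length (chainlist w Y n) = 2 * n"
  by (simp add: chainlist_def)

context trirep begin

lemma case_L:
  assumes kap: "\<forall>f\<in>Fm m. K f = scl ka f" and v: "v \<in> Fm m" "v \<noteq> 0" "X v = 0" "M v = scl al v" "al \<noteq> 0"
    and Linj: "\<forall>f\<in>Fm m. L f = 0 \<longrightarrow> f = 0" and ell: "\<forall>f\<in>Fm m. (L ^^ n) f = scl l f"
  shows "m \<le> 2 * n"
proof -
  define w where "w j = (L ^^ j) v" for j
  have wS: "w (Suc j) = L (w j)" for j by (simp add: w_def)
  have w0: "w 0 = v" by (simp add: w_def)
  have wF: "w j \<in> Fm m" for j
  proof (cases j)
    case 0 thus ?thesis using v by (simp add: w_def)
  next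
    case (Suc i) thus ?thesis using FL by (simp add: wS)
  qed
  have wX: "X (w j) = 0" for j
  proof (induct j)
    case 0 show ?case using v(3) by (simp only: w0)
  next
    case (Suc j) show ?case by (simp only: wS) (rule key3[OF Suc])
  qed
  define g where "g j = inverse la ^ j * al" for j
  have gnz: "g j \<noteq> 0" for j using la_nz v(5) by (simp add: g_def)
  have wM: "M (w j) = scl (g j) (w j)" for j
  proof (induct j)
    case 0 thus ?case using v by (simp add: w0 g_def)
  next
    case (Suc j)
    have "M (w (Suc j)) = scl (inverse la) (L (M (w j)))" by (simp add: wS MLc)
    also have "\<dots> = scl (g (Suc j)) (w (Suc j))"
      by (simp add: Suc linop_scl[OF linL] wS g_def mult_ac)
    finally show ?case .
  qed
  have l_nz: "l \<noteq> 0"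
  proof
    assume "l = 0"
    hence "(L ^^ n) v = 0" using ell v by simp
    hence "v = 0" using pow_inj[OF Linj FL v(1)] by blast
    thus False using v by simp
  qed
  have per: "w (j + n) = scl l (w j)" for j
  proof -
    have "w (j + n) = (L ^^ j) ((L ^^ n) v)" by (simp add: w_def funpow_add)
    also have "\<dots> = scl l (w j)" using ell v by (simp add: linop_scl[OF linop_funpow[OF linL]] w_def)
    finally show ?thesis .
  qed
  define gs where "gs = chainlist w Y n"
  have mem: "w j \<in> spn gs \<and> Y (w j) \<in> spn gs" for j
    unfolding gs_def by (rule chain_periodic[where w=w and p=l and Y=Y and n=n, OF per linY npos])
  have Yspn: "Y f \<in> spn gs" if "f \<in> spn gs" for f
  proof (rule span_inv[OF linY _ that], rule ballI)
    fix h assume "h \<in> set gs"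
    then obtain j where "h = w j \<or> h = Y (w j)" unfolding gs_def using chain_set by blast
    thus "Y h \<in> spn gs" using mem spn_0 by auto
  qed
  have Zw: "Z (w j) \<in> spn gs" for j
  proof -
    have "scl (g j) (Z (w j)) = scl ka (w j) + Y (w (Suc j))"
      using key2[OF kap wF wX wM] by (simp add: wS)
    hence "Z (w j) = scl (inverse (g j)) (scl ka (w j) + Y (w (Suc j)))"
      using gnz by (rule scl_solve)
    thus ?thesis using mem by (simp add: spn_add spn_scl)
  qed
  have NwS: "N (w (Suc j)) \<in> spn gs" for j
  proof -
    have "scl (g j) (N (w (Suc j))) = scl (- la * ka ^ 2) (w j)"
      using key4[OF kap wF wX wM] by (simp add: wS)
    hence "N (w (Suc j)) = scl (inverse (g j)) (scl (- la * ka ^ 2) (w j))"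
      using gnz by (rule scl_solve)
    thus ?thesis using mem by (simp add: spn_scl)
  qed
  have Nw: "N (w j) \<in> spn gs" for j
  proof (cases j)
    case (Suc i) thus ?thesis using NwS by simp
  next
    case 0
    have "w n = scl l (w 0)" using per[of 0] by simp
    hence "w 0 = scl (inverse l) (w n)" using l_nz by (simp add: scl_solve)
    hence "N (w 0) = scl (inverse l) (N (w (Suc (n - 1))))" using npos by (simp add: linop_scl[OF linN])
    thus ?thesis using NwS 0 by (simp add: spn_scl)
  qed
  have ZYw: "Z (Y (w j)) \<in> spn gs" for j
  proof -
    have "N (w j) = Y (Z (w j)) + scl la (Z (Y (w j)))" by (simp add: N_def)
    hence "scl la (Z (Y (w j))) = N (w j) - Y (Z (w j))" by (simp add: algebra_simps)
    hence "Z (Y (w j)) = scl (inverse la) (N (w j) - Y (Z (w j)))" using la_nz by (rule scl_solve)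
    thus ?thesis using Nw Zw Yspn by (simp add: spn_scl spn_diff)
  qed
  have "m \<le> length gs"
  proof (rule bound_by_list)
    show "set gs \<subseteq> Fm m" unfolding gs_def chainlist_def using wF FY by auto
    show "\<exists>h\<in>set gs. h \<noteq> 0" using npos v(2) w0 unfolding gs_def chainlist_def by force
    show "\<forall>h\<in>set gs. X h \<in> spn gs \<and> Y h \<in> spn gs \<and> Z h \<in> spn gs"
    proof
      fix h assume "h \<in> set gs"
      then obtain j where "h = w j \<or> h = Y (w j)" unfolding gs_def using chain_set by blast
      moreover have "X (Y (w j)) = scl (g j) (w j)" by (rule key1[OF wX wM])
      ultimately show "X h \<in> spn gs \<and> Y h \<in> spn gs \<and> Z h \<in> spn gs"
        using mem wX Zw ZYw spn_0 spn_scl by auto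
    qed
  qed
  thus ?thesis by (simp add: gs_def chainlist_len)
qed

lemma case_N:
  assumes kap: "\<forall>f\<in>Fm m. K f = scl ka f" and v: "v \<in> Fm m" "v \<noteq> 0" "X v = 0" "M v = scl al v" "al \<noteq> 0"
    and L0: "\<forall>f\<in>Fm m. L f = 0" and nu: "\<forall>f\<in>Fm m. (N ^^ n) f = scl l f"
  shows "m \<le> 2 * n"
proof -
  define w where "w j = (N ^^ j) v" for j
  have wS: "w (Suc j) = N (w j)" for j by (simp add: w_def)
  have w0: "w 0 = v" by (simp add: w_def)
  have wF: "w j \<in> Fm m" for j
  proof (cases j)
    case 0 thus ?thesis using v by (simp add: w_def)
  next
    case (Suc i) thus ?thesis using FN by (simp add: wS)
  qed
  have wX: "X (w j) = 0" for j
  proof (induct j)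
    case 0 show ?case using v(3) by (simp only: w0)
  next
    case (Suc j) show ?case by (simp only: wS XN Suc linop_zero[OF linN])
  qed
  define g where "g j = la ^ j * al" for j
  have gnz: "g j \<noteq> 0" for j using la_nz v(5) by (simp add: g_def)
  have wM: "M (w j) = scl (g j) (w j)" for j
  proof (induct j)
    case 0 thus ?case using v by (simp add: w0 g_def)
  next
    case (Suc j)
    have "M (w (Suc j)) = scl la (N (M (w j)))" by (simp add: wS MN)
    also have "\<dots> = scl (g (Suc j)) (w (Suc j))"
      by (simp add: Suc linop_scl[OF linN] wS g_def mult_ac)
    finally show ?case .
  qed
  have ka0: "ka = 0"
  proof -
    have "scl al (Z v) = scl ka v + Y (L v)" by (rule key2[OF kap v(1) v(3) v(4)])
    hence "scl al (Z v) = scl ka v" using L0 v(1) by simp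
    hence zv: "Z v = scl (inverse al * ka) v" using v(5) by (auto dest: scl_solve)
    have "0 = Z (Z v)" by simp
    also have "\<dots> = scl ((inverse al * ka) * (inverse al * ka)) v" by (simp add: zv)
    finally have "inverse al * ka * (inverse al * ka) = 0" using v(2) scl_zero_nz by metis
    thus ?thesis using v(5) by simp
  qed
  have Zw0: "Z (w j) = 0" for j
  proof -
    have "scl (g j) (Z (w j)) = scl ka (w j) + Y (L (w j))" by (rule key2[OF kap wF wX wM])
    hence "scl (g j) (Z (w j)) = 0" using L0 wF ka0 by simp
    thus ?thesis using gnz by (auto dest: scl_solve)
  qed
  have per: "w (j + n) = scl l (w j)" for j
  proof -
    have "w (j + n) = (N ^^ j) ((N ^^ n) v)" by (simp add: w_def funpow_add)
    also have "\<dots> = scl l (w j)" using nu v by (simp add: linop_scl[OF linop_funpow[OF linN]] w_def)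
    finally show ?thesis .
  qed
  define gs where "gs = chainlist w Y n"
  have mem: "w j \<in> spn gs \<and> Y (w j) \<in> spn gs" for j
    unfolding gs_def by (rule chain_periodic[where w=w and p=l and Y=Y and n=n, OF per linY npos])
  have ZYw: "Z (Y (w j)) \<in> spn gs" for j
  proof -
    have "N (w j) = Y (Z (w j)) + scl la (Z (Y (w j)))" by (simp add: N_def)
    hence "scl la (Z (Y (w j))) = w (Suc j)" by (simp add: Zw0 wS)
    hence "Z (Y (w j)) = scl (inverse la) (w (Suc j))" using la_nz by (rule scl_solve)
    thus ?thesis using mem by (simp add: spn_scl)
  qed
  have "m \<le> length gs"
  proof (rule bound_by_list)
    show "set gs \<subseteq> Fm m" unfolding gs_def chainlist_def using wF FY by auto
    show "\<exists>h\<in>set gs. h \<noteq> 0" using npos v(2) w0 unfolding gs_def chainlist_def by force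
    show "\<forall>h\<in>set gs. X h \<in> spn gs \<and> Y h \<in> spn gs \<and> Z h \<in> spn gs"
    proof
      fix h assume "h \<in> set gs"
      then obtain j where "h = w j \<or> h = Y (w j)" unfolding gs_def using chain_set by blast
      moreover have "X (Y (w j)) = scl (g j) (w j)" by (rule key1[OF wX wM])
      ultimately show "X h \<in> spn gs \<and> Y h \<in> spn gs \<and> Z h \<in> spn gs"
        using mem wX Zw0 ZYw spn_0 spn_scl by auto
    qed
  qed
  thus ?thesis by (simp add: gs_def chainlist_len)
qed

end


declare scl_apply[simp del]

lemma scl_nz_cancel: "scl c f = 0 \<Longrightarrow> c \<noteq> 0 \<Longrightarrow> f = 0"
  by (drule scl_solve) auto

context trirep begin

lemma pow_root: "(be * la ^ i) ^ e = be ^ e * la ^ (e * i)"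
  by (simp add: power_mult_distrib power_mult[symmetric] mult.commute)

lemma main_M:
  assumes "\<exists>f\<in>Fm m. M f \<noteq> 0"
  shows "m \<le> 2 * n"
proof -
  have Minj: "\<forall>f\<in>Fm m. M f = 0 \<longrightarrow> f = 0" using M_dich assms by blast
  obtain mu where mu: "\<forall>f\<in>Fm m. (M ^^ n) f = scl mu f" using M_central by blast
  define e0 :: "nat \<Rightarrow> complex" where "e0 = (\<lambda>i. if i = 0 then 1 else 0)"
  have e0F: "e0 \<in> Fm m" using mpos by (auto simp: e0_def Fm_def)
  have "e0 0 \<noteq> 0 0" by (simp add: e0_def)
  hence e0nz: "e0 \<noteq> 0" by metis
  have mu_nz: "mu \<noteq> 0"
  proof
    assume "mu = 0"
    hence "(M ^^ n) e0 = 0" using mu e0F by simp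
    hence "e0 = 0" using pow_inj[OF Minj FM e0F] by blast
    thus False using e0nz by simp
  qed
  obtain u where u: "u \<in> Fm m" "u \<noteq> 0" "X u = 0"
  proof (cases "\<forall>f\<in>Fm m. X f = 0")
    case True thus ?thesis using that e0F e0nz by blast
  next
    case False then obtain f where "f \<in> Fm m" "X f \<noteq> 0" by blast
    thus ?thesis using that[of "X f"] FX sqX by blast
  qed
  obtain be where be: "be ^ n = mu"
  proof -
    obtain c' where bij: "bij_betw (\<lambda>z. c' * z) {z::complex. z ^ n = 1} {z. z ^ n = mu}"
      using bij_betw_nth_root_unity[OF mu_nz npos] by blast
    have "(1::complex) \<in> {z. z ^ n = 1}" by simp
    hence "c' * 1 \<in> {z. z ^ n = mu}" using bij_betwE[OF bij] by blast
    thus ?thesis using that by auto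
  qed
  have be_nz: "be \<noteq> 0" using be mu_nz npos by (metis power_0_left not_gr0)
  define a where "a k = (M ^^ k) u" for k
  have aF: "a k \<in> Fm m" for k
  proof (cases k)
    case 0 thus ?thesis using u by (simp add: a_def)
  next
    case (Suc j) thus ?thesis unfolding a_def by (intro funpow_Fm[OF FM]) simp
  qed
  have aX: "X (a k) = 0" for k
  proof -
    have "X (a k) = scl (la ^ k) ((M ^^ k) (X u))" unfolding a_def by (rule pow_twist[OF linX linM XM])
    also have "\<dots> = 0" by (simp only: u(3) linop_zero[OF linop_funpow[OF linM]] scl_0_fun)
    finally show ?thesis .
  qed
  have aS: "M (a k) = a (Suc k)" for k by (simp add: a_def)
  have an: "a n = scl mu u" using mu u(1) by (simp add: a_def)
  have a0: "a 0 = u" by (simp add: a_def)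
  have anz: "a k \<noteq> 0" for k using pow_inj[OF Minj FM u(1)] u(2) by (auto simp: a_def)
  define ga where "ga i = be * la ^ i" for i
  have gan: "ga i ^ n = mu" for i
  proof -
    have "ga i ^ n = be ^ n * la ^ (n * i)" unfolding ga_def by (rule pow_root)
    also have "la ^ (n * i) = 1" by (simp add: power_mult lan)
    finally show ?thesis using be by simp
  qed
  have ga_nz: "ga i \<noteq> 0" for i using be_nz la_nz by (simp add: ga_def)
  obtain p where np: "n = Suc p" using npos by (cases n) auto
  define v where "v i = (\<Sum>k<n. scl (ga i ^ (p - k)) (a k))" for i
  have vM: "M (v i) = scl (ga i) (v i)" for i
  proof (rule ext)
    fix x
    have "M (v i) = (\<Sum>k<n. scl (ga i ^ (p - k)) (a (Suc k)))"
      by (simp add: v_def linop_sum[OF linM] linop_scl[OF linM] aS)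
    hence "M (v i) x = (\<Sum>k<Suc p. ga i ^ (p - k) * (\<lambda>k. a k x) (Suc k))"
      by (simp add: fsum_apply scl_apply np)
    also have "\<dots> = ga i * (\<Sum>k<Suc p. ga i ^ (p - k) * (\<lambda>k. a k x) k)"
    proof (rule fourier_shift)
      have "a (Suc p) x = mu * u x" using an np by (simp add: scl_apply)
      thus "(\<lambda>k. a k x) (Suc p) = ga i ^ Suc p * (\<lambda>k. a k x) 0" using gan[of i] np a0 by simp
    qed
    also have "\<dots> = scl (ga i) (v i) x" by (simp add: v_def fsum_apply scl_apply np)
    finally show "M (v i) x = scl (ga i) (v i) x" .
  qed
  have vF: "v i \<in> Fm m" for i unfolding v_def by (intro Fm_sum Fm_scl aF)
  have vX: "X (v i) = 0" for i
    by (simp add: v_def linop_sum[OF linX] linop_scl[OF linX] aX)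
  have vsum: "(\<Sum>i<n. v i) = scl (of_nat n) (a p)"
  proof (rule ext)
    fix x
    have "(\<Sum>i<n. v i) x = (\<Sum>i<n. \<Sum>k<n. ga i ^ (p - k) * a k x)"
      by (simp add: v_def fsum_apply scl_apply)
    also have "\<dots> = (\<Sum>k<n. \<Sum>i<n. ga i ^ (p - k) * a k x)" by (rule sum.swap)
    also have "\<dots> = (\<Sum>k<n. be ^ (p - k) * a k x * (\<Sum>i<n. la ^ ((p - k) * i)))"
      by (rule sum.cong) (simp_all add: ga_def pow_root sum_distrib_left mult_ac)
    also have "\<dots> = (\<Sum>k<n. if k = p then of_nat n * a p x else 0)"
    proof (rule sum.cong)
      fix k assume k: "k \<in> {..<n}"
      show "be ^ (p - k) * a k x * (\<Sum>i<n. la ^ ((p - k) * i)) = (if k = p then of_nat n * a p x else 0)"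
      proof (cases "k = p")
        case True thus ?thesis by (simp add: root_sum[OF lan prim npos])
      next
        case False
        hence "0 < p - k" "p - k < n" using k np by auto
        hence "\<not> n dvd (p - k)" by (auto dest: dvd_imp_le)
        thus ?thesis using False by (simp add: root_sum[OF lan prim npos])
      qed
    qed simp
    also have "\<dots> = of_nat n * a p x" using np by simp
    finally show "(\<Sum>i<n. v i) x = scl (of_nat n) (a p) x" by (simp add: scl_apply)
  qed
  have "\<exists>i<n. v i \<noteq> 0"
  proof (rule ccontr)
    assume "\<not> (\<exists>i<n. v i \<noteq> 0)"
    hence "(\<Sum>i<n. v i) = 0" by simp
    hence "scl (of_nat n) (a p) = 0" using vsum by simp
    hence "(of_nat n :: complex) = 0" using anz scl_zero_nz by blast
    thus False using npos by simp
  qed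
  then obtain i where vi: "v i \<noteq> 0" by blast
  obtain ka where kap: "\<forall>f\<in>Fm m. K f = scl ka f" using K_central by blast
  show ?thesis
  proof (cases "\<forall>f\<in>Fm m. L f = 0")
    case True
    obtain nu where "\<forall>f\<in>Fm m. (N ^^ n) f = scl nu f" using N_central by blast
    thus ?thesis using case_N[OF kap vF vi vX vM ga_nz True] by blast
  next
    case False
    hence Linj: "\<forall>f\<in>Fm m. L f = 0 \<longrightarrow> f = 0" using L_dich by blast
    obtain l where "\<forall>f\<in>Fm m. (L ^^ n) f = scl l f" using L_central by blast
    thus ?thesis using case_L[OF kap vF vi vX vM ga_nz Linj] by blast
  qed
qed

lemma bound: "m \<le> 2 * n"
proof (cases "\<exists>f\<in>Fm m. M f \<noteq> 0")
  case True thus ?thesis by (rule main_M)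
next
  case noM: False
  show ?thesis
  proof (cases "\<exists>f\<in>Fm m. N f \<noteq> 0")
    case True
    interpret r: trirep m n la Y Z X
      apply unfold_locales
      apply (fact linY) apply (fact linZ) apply (fact linX)
      apply (fact FY) apply (fact FZ) apply (fact FX)
      apply (fact sqY) apply (fact sqZ) apply (fact sqX)
      apply (fact Rx) apply (fact Ry) apply (fact Rz)
      apply (fact lan) apply (fact prim) apply (fact npos) apply (fact mpos)
      using simple apply blast
      apply (fact eig) apply (fact dimb)
      done
    have "r.M = N" by (rule ext) (simp add: r.M_def N_def)
    thus ?thesis using r.main_M True by simp
  next
    case noN: False
    show ?thesis
    proof (cases "\<exists>f\<in>Fm m. L f \<noteq> 0")
      case True
      interpret r: trirep m n la Z X Y
        apply unfold_locales
        apply (fact linZ) apply (fact linX) apply (fact linY)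
        apply (fact FZ) apply (fact FX) apply (fact FY)
        apply (fact sqZ) apply (fact sqX) apply (fact sqY)
        apply (fact Ry) apply (fact Rz) apply (fact Rx)
        apply (fact lan) apply (fact prim) apply (fact npos) apply (fact mpos)
        using simple apply blast
        apply (fact eig) apply (fact dimb)
        done
      have "r.M = L" by (rule ext) (simp add: r.M_def L_def)
      thus ?thesis using r.main_M True by simp
    next
      case noL: False
      have M0: "M f = 0" if "f \<in> Fm m" for f using noM that by blast
      have N0: "N f = 0" if "f \<in> Fm m" for f using noN that by blast
      have L0: "L f = 0" if "f \<in> Fm m" for f using noL that by blast
      define e0 :: "nat \<Rightarrow> complex" where "e0 = (\<lambda>i. if i = 0 then 1 else 0)"
      have e0F: "e0 \<in> Fm m" using mpos by (auto simp: e0_def Fm_def)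
      have "e0 0 \<noteq> 0 0" by (simp add: e0_def)
      hence e0nz: "e0 \<noteq> 0" by metis
      obtain u1 where u1: "u1 \<in> Fm m" "u1 \<noteq> 0" "Z u1 = 0"
      proof (cases "Z e0 = 0")
        case True thus ?thesis using that e0F e0nz by blast
      next
        case False thus ?thesis using that[of "Z e0"] FZ sqZ by blast
      qed
      obtain u2 where u2: "u2 \<in> Fm m" "u2 \<noteq> 0" "Z u2 = 0" "Y u2 = 0"
      proof (cases "Y u1 = 0")
        case True thus ?thesis using that u1 by blast
      next
        case False
        have "N u1 = 0" using N0 u1(1) .
        hence "scl la (Z (Y u1)) = 0" using u1(3) by (simp add: N_def)
        hence "Z (Y u1) = 0" using la_nz by (rule scl_nz_cancel)
        thus ?thesis using that[of "Y u1"] FY sqY False by blast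
      qed
      obtain u3 where u3: "u3 \<in> Fm m" "u3 \<noteq> 0" "Z u3 = 0" "Y u3 = 0" "X u3 = 0"
      proof (cases "X u2 = 0")
        case True thus ?thesis using that u2 by blast
      next
        case False
        have "M u2 = 0" using M0 u2(1) .
        hence "scl la (Y (X u2)) = 0" using u2(4) by (simp add: M_def)
        hence a: "Y (X u2) = 0" using la_nz by (rule scl_nz_cancel)
        have "L u2 = 0" using L0 u2(1) .
        hence b: "Z (X u2) = 0" using u2(3) by (simp add: L_def)
        show ?thesis using that[of "X u2"] FX sqX False a b by blast
      qed
      have "m \<le> length [u3]"
        by (rule bound_by_list) (use u3 spn_0 in auto)
      thus ?thesis using npos by simp
    qed
  qed
qed

end


declare scl_apply[simp del]

lemma word_eval_Cons: "word_eval m A (i # w) = A i * word_eval m A w"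
  by (simp add: word_eval_def)
lemma word_eval_Nil: "word_eval m A [] = 1\<^sub>m m"
  by (simp add: word_eval_def)

lemma word_eval_carrier: "(\<forall>i\<in>set w. A i \<in> carrier_mat m m) \<Longrightarrow> word_eval m A w \<in> carrier_mat m m"
  by (induct w) (auto simp: word_eval_Cons word_eval_Nil)

lemma opm_word: "(\<forall>i\<in>set w. A i \<in> carrier_mat m m) \<Longrightarrow>
  opm m (word_eval m A w) f = foldr (\<lambda>i g. opm m (A i) g) w (restr m f)"
  by (induct w) (auto simp: word_eval_Cons word_eval_Nil opm_one opm_mult word_eval_carrier)

lemma nc_eval_Cons: "nc_eval m A ((c, w) # p) = c \<cdot>\<^sub>m word_eval m A w + nc_eval m A p"
  by (simp add: nc_eval_def)
lemma nc_eval_Nil: "nc_eval m A [] = 0\<^sub>m m m"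
  by (simp add: nc_eval_def)

lemma nc_eval_carrier: "(\<forall>x\<in>set p. \<forall>i\<in>set (snd x). A i \<in> carrier_mat m m) \<Longrightarrow> nc_eval m A p \<in> carrier_mat m m"
  by (induct p) (auto simp: nc_eval_Cons nc_eval_Nil word_eval_carrier)

lemma opm_nc: "(\<forall>x\<in>set p. \<forall>i\<in>set (snd x). A i \<in> carrier_mat m m) \<Longrightarrow>
  opm m (nc_eval m A p) f = foldr (\<lambda>(c, w) g. scl c (opm m (word_eval m A w) f) + g) p 0"
proof (induct p)
  case Nil thus ?case by (simp add: nc_eval_Nil opm_zero)
next
  case (Cons x p)
  obtain c w where x: "x = (c, w)" by fastforce
  have cw: "word_eval m A w \<in> carrier_mat m m" using Cons(2) x by (auto intro: word_eval_carrier)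
  have cp: "nc_eval m A p \<in> carrier_mat m m" using Cons(2) by (auto intro: nc_eval_carrier)
  show ?case using Cons cw cp unfolding x
    by (simp add: nc_eval_Cons opm_add opm_smult)
qed

lemma vec_Fm_inj: "f \<in> Fm m \<Longrightarrow> g \<in> Fm m \<Longrightarrow> vec m f = vec m g \<Longrightarrow> f = g"
proof (rule ext)
  fix i assume "f \<in> Fm m" "g \<in> Fm m" "vec m f = vec m g"
  thus "f i = g i"
  proof (cases "i < m")
    case True thus ?thesis using \<open>vec m f = vec m g\<close> by (metis index_vec)
  qed (use \<open>f \<in> Fm m\<close> \<open>g \<in> Fm m\<close> in \<open>auto simp: Fm_def\<close>)
qed

lemma mult_vec_opm: "A \<in> carrier_mat m m \<Longrightarrow> A *\<^sub>v vec m f = vec m (opm m A f)"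
  by (rule eq_vecI) (auto simp: opm_def scalar_prod_def lessThan_atLeast0)

lemma simple_transfer:
  assumes "simple_rep m A" "\<forall>i<3. A i \<in> carrier_mat m m"
    and W: "subsp m W" "\<forall>f\<in>W. opm m (A 0) f \<in> W \<and> opm m (A 1) f \<in> W \<and> opm m (A 2) f \<in> W"
  shows "W = {0} \<or> W = Fm m"
proof -
  define V where "V = (\<lambda>f. vec m f) ` W"
  have WF: "W \<subseteq> Fm m" "0 \<in> W" "\<And>f g. f \<in> W \<Longrightarrow> g \<in> W \<Longrightarrow> f + g \<in> W" "\<And>c f. f \<in> W \<Longrightarrow> scl c f \<in> W"
    using W(1) unfolding subsp_def by auto
  have "is_subspace m V"
    unfolding is_subspace_def
  proof (intro conjI ballI allI)
    show "V \<subseteq> carrier_vec m" unfolding V_def by auto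
    have "vec m 0 = (0\<^sub>v m :: complex vec)" by (rule eq_vecI) auto
    thus "0\<^sub>v m \<in> V" using WF(2) unfolding V_def by (metis image_eqI)
  next
    fix u v assume "u \<in> V" "v \<in> V"
    then obtain f g where fg: "f \<in> W" "g \<in> W" "u = vec m f" "v = vec m g" unfolding V_def by auto
    have "u + v = vec m (f + g)" unfolding fg by (rule eq_vecI) auto
    thus "u + v \<in> V" using WF(3)[OF fg(1,2)] unfolding V_def by blast
  next
    fix c u assume "u \<in> V"
    then obtain f where f: "f \<in> W" "u = vec m f" unfolding V_def by auto
    have "c \<cdot>\<^sub>v u = vec m (scl c f)" unfolding f by (rule eq_vecI) (auto simp: scl_apply)
    thus "c \<cdot>\<^sub>v u \<in> V" using WF(4)[OF f(1)] unfolding V_def by blast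
  qed
  moreover have "\<forall>i<3. \<forall>v\<in>V. A i *\<^sub>v v \<in> V"
  proof (intro allI impI ballI)
    fix i v assume i: "i < (3::nat)" and "v \<in> V"
    then obtain f where f: "f \<in> W" "v = vec m f" unfolding V_def by auto
    have "A i *\<^sub>v v = vec m (opm m (A i) f)" unfolding f using assms(2) i by (simp add: mult_vec_opm)
    moreover have "opm m (A i) f \<in> W" using W(2) f(1) i by (auto simp: numeral_3_eq_3 numeral_2_eq_2 less_Suc_eq)
    ultimately show "A i *\<^sub>v v \<in> V" unfolding V_def by blast
  qed
  ultimately have "V = {0\<^sub>v m} \<or> V = carrier_vec m" using assms(1) unfolding simple_rep_def by blast
  thus ?thesis
  proof
    assume V0: "V = {0\<^sub>v m}"
    have "f = 0" if "f \<in> W" for f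
    proof -
      have "vec m f \<in> V" using that unfolding V_def by blast
      hence "vec m f = 0\<^sub>v m" using V0 by blast
      moreover have "vec m 0 = (0\<^sub>v m :: complex vec)" by (rule eq_vecI) auto
      ultimately have "vec m f = vec m 0" by simp
      thus ?thesis using vec_Fm_inj[of f m 0] WF(1) that by auto
    qed
    thus ?thesis using WF(2) by auto
  next
    assume VC: "V = carrier_vec m"
    have "g \<in> W" if "g \<in> Fm m" for g
    proof -
      have "vec m g \<in> V" using VC by auto
      then obtain f where "f \<in> W" "vec m g = vec m f" unfolding V_def by auto
      thus ?thesis using vec_Fm_inj[of g m f] WF(1) that by auto
    qed
    thus ?thesis using WF(1) by auto
  qed
qed

definition ej :: "nat \<Rightarrow> nat \<Rightarrow> complex" where "ej j = (\<lambda>k. if k = j then 1 else 0)"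

lemma Fm_decomp: "f \<in> Fm m \<Longrightarrow> f = (\<Sum>j<m. scl (f j) (ej j))"
proof (rule ext)
  fix i assume f: "f \<in> Fm m"
  show "f i = (\<Sum>j<m. scl (f j) (ej j)) i"
  proof (cases "i < m")
    case True
    have "(\<Sum>j<m. scl (f j) (ej j)) i = (\<Sum>j<m. if j = i then f i else 0)"
      unfolding fsum_apply by (rule sum.cong) (auto simp: scl_apply ej_def)
    thus ?thesis using True by simp
  next
    case False
    have "(\<Sum>j<m. scl (f j) (ej j)) i = 0" unfolding fsum_apply
      by (rule sum.neutral) (use False in \<open>auto simp: scl_apply ej_def\<close>)
    thus ?thesis using f False by (simp add: Fm_def)
  qed
qed

lemma eig_exists:
  assumes m: "0 < m" and C: "linop C" "\<And>f. C f \<in> Fm m"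
  shows "\<exists>c g. g \<in> Fm m \<and> g \<noteq> 0 \<and> C g = scl c g"
proof -
  define Cm :: "complex mat" where "Cm = mat m m (\<lambda>(i,j). C (ej j) i)"
  have Cc: "Cm \<in> carrier_mat m m" by (simp add: Cm_def)
  obtain c where "c \<in> spectrum Cm" using spectrum_non_empty[OF Cc m] by blast
  then obtain v where ev: "eigenvector Cm v c" unfolding spectrum_def eigenvalue_def by auto
  hence v: "v \<in> carrier_vec m" "v \<noteq> 0\<^sub>v m" "Cm *\<^sub>v v = c \<cdot>\<^sub>v v"
    unfolding eigenvector_def using Cc by auto
  define g where "g = (\<lambda>i. if i < m then v $ i else 0)"
  have gF: "g \<in> Fm m" by (simp add: g_def Fm_def)
  have gnz: "g \<noteq> 0"
  proof
    assume "g = 0"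
    hence "v = 0\<^sub>v m" using v(1) by (intro eq_vecI) (auto simp: g_def fun_eq_iff, metis)
    thus False using v(2) by simp
  qed
  have "C g = scl c g"
  proof (rule ext)
    fix i
    have "C g = (\<Sum>j<m. scl (g j) (C (ej j)))"
      by (subst Fm_decomp[OF gF]) (simp add: linop_sum[OF C(1)] linop_scl[OF C(1)])
    hence Cg: "C g i = (\<Sum>j<m. g j * C (ej j) i)" by (simp add: fsum_apply scl_apply)
    show "C g i = scl c g i"
    proof (cases "i < m")
      case True
      have "(Cm *\<^sub>v v) $ i = (\<Sum>j<m. C (ej j) i * v $ j)"
        using True v(1) by (simp add: Cm_def scalar_prod_def lessThan_atLeast0)
      hence "(\<Sum>j<m. C (ej j) i * v $ j) = c * v $ i" using v(3) True v(1) by simp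
      moreover have "(\<Sum>j<m. g j * C (ej j) i) = (\<Sum>j<m. C (ej j) i * v $ j)"
        by (rule sum.cong) (auto simp: g_def)
      ultimately show ?thesis using Cg True by (simp add: scl_apply g_def)
    next
      case False
      have "C (ej j) i = 0" for j using C(2)[of "ej j"] False by (simp add: Fm_def)
      thus ?thesis using Cg False by (simp add: scl_apply g_def)
    qed
  qed
  thus ?thesis using gF gnz by blast
qed


declare scl_apply[simp del]

lemma dim_bound:
  assumes "\<forall>f\<in>Fm m. \<exists>c. f = lc c gs"
  shows "m \<le> length gs"
proof (rule ccontr)
  define k where "k = length gs"
  assume "\<not> m \<le> length gs"
  hence km: "k < m" by (simp add: k_def)
  have "\<forall>j. \<exists>c. j < m \<longrightarrow> ej j = lc c gs"
  proof
    fix j show "\<exists>c. j < m \<longrightarrow> ej j = lc c gs"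
    proof (cases "j < m")
      case True
      have "ej j \<in> Fm m" using True by (auto simp: ej_def Fm_def)
      thus ?thesis using assms by auto
    qed simp
  qed
  then obtain cf where cf: "\<And>j. j < m \<Longrightarrow> ej j = lc (cf j) gs" by metis
  define G :: "complex mat" where "G = mat m m (\<lambda>(i,l). if l < k then (gs ! l) i else 0)"
  define Cm :: "complex mat" where "Cm = mat m m (\<lambda>(l,j). if l < k then cf j l else 0)"
  have GC: "G \<in> carrier_mat m m" "Cm \<in> carrier_mat m m" by (simp_all add: G_def Cm_def)
  have "G * Cm = 1\<^sub>m m"
  proof (rule eq_matI)
    fix i j assume ij: "i < dim_row (1\<^sub>m m :: complex mat)" "j < dim_col (1\<^sub>m m :: complex mat)"
    hence ij': "i < m" "j < m" by auto
    have "(G * Cm) $$ (i, j) = (\<Sum>l\<in>{..<m}. if l < k then (gs ! l) i * cf j l else 0)"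
      using ij' by (simp add: G_def Cm_def scalar_prod_def lessThan_atLeast0 if_distrib cong: if_cong)
    also have "\<dots> = (\<Sum>l\<in>{..<m} \<inter> {..<k}. (gs ! l) i * cf j l)"
      by (simp add: sum.inter_restrict)
    also have "{..<m} \<inter> {..<k} = {..<k}" using km by auto
    also have "(\<Sum>l<k. (gs ! l) i * cf j l) = lc (cf j) gs i"
      by (simp add: lc_def k_def fsum_apply scl_apply mult.commute)
    also have "\<dots> = ej j i" using cf[OF ij'(2)] by simp
    also have "\<dots> = 1\<^sub>m m $$ (i, j)" using ij' by (simp add: ej_def)
    finally show "(G * Cm) $$ (i, j) = 1\<^sub>m m $$ (i, j)" .
  qed (simp_all add: G_def Cm_def)
  hence CG: "Cm * G = 1\<^sub>m m" by (rule mat_mult_left_right_inverse[OF GC(1) GC(2)])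
  have "(Cm * G) $$ (m - 1, m - 1) = 0"
    using km by (simp add: G_def Cm_def scalar_prod_def)
  moreover have "(1\<^sub>m m :: complex mat) $$ (m - 1, m - 1) = 1" using km by simp
  ultimately show False using CG by simp
qed

lemma rz_alg:
  fixes w t a1 a2 a3 a4 a5 a6 :: complex
  assumes "w ^ 3 = 1" "w \<noteq> 1"
    "a1 + w*a2 + w^2*a3 + t*a4 + t*w*a5 + t*w^2*a6 = 0"
    "a1 + w^2*a2 + w*a3 + t*a4 + t*w^2*a5 + t*w*a6 = 0"
  shows "a1 - a2 + t*a4 - t*a5 = 0"
proof -
  have "(1-w)*(a1 - a2 + t*a4 - t*a5) = (a1 + w*a2 + w^2*a3 + t*a4 + t*w*a5 + t*w^2*a6)
     - w*(a1 + w^2*a2 + w*a3 + t*a4 + t*w^2*a5 + t*w*a6) + (w^3 - 1)*(a2 + t*a5)" by (simp add: algebra_simps power2_eq_square power3_eq_cube)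
  also have "\<dots> = 0" using assms by simp
  finally show ?thesis using assms(2) by simp
qed

lemma rx_alg:
  fixes w t a1 a2 a3 a4 a5 a6 :: complex
  assumes "w ^ 3 = 1" "w \<noteq> 1"
    "a1 + w*a2 + w^2*a3 + t*a4 + t*w*a5 + t*w^2*a6 = 0"
    "a1 + w^2*a2 + w*a3 + t*a4 + t*w^2*a5 + t*w*a6 = 0"
  shows "a2 - a3 + t*a5 - t*a6 = 0"
proof -
  have "(w - w^2)*(a2 - a3 + t*a5 - t*a6) = (a1 + w*a2 + w^2*a3 + t*a4 + t*w*a5 + t*w^2*a6)
     - (a1 + w^2*a2 + w*a3 + t*a4 + t*w^2*a5 + t*w*a6)" by (simp add: algebra_simps power2_eq_square power3_eq_cube)
  also have "\<dots> = 0" using assms by simp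
  finally have "(w * (1 - w)) * (a2 - a3 + t*a5 - t*a6) = 0" by (simp add: algebra_simps power2_eq_square)
  moreover have "w \<noteq> 0" using assms(1) by auto
  ultimately show ?thesis using assms(2) by simp
qed

lemma ry_alg:
  fixes w t a1 a2 a3 a4 a5 a6 :: complex
  assumes "w ^ 3 = 1" "w \<noteq> 1"
    "a1 + w*a2 + w^2*a3 + t*a4 + t*w*a5 + t*w^2*a6 = 0"
    "a1 + w^2*a2 + w*a3 + t*a4 + t*w^2*a5 + t*w*a6 = 0"
  shows "a1 - a3 + t*a4 - t*a6 = 0"
proof -
  have "(1 - w^2)*(a1 - a3 + t*a4 - t*a6) = (a1 + w*a2 + w^2*a3 + t*a4 + t*w*a5 + t*w^2*a6)
     - w^2*(a1 + w^2*a2 + w*a3 + t*a4 + t*w^2*a5 + t*w*a6) + (w^3 - 1)*(w*a2 + a3 + t*w*a5 + t*a6)" by (simp add: algebra_simps power2_eq_square power3_eq_cube)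
  also have "\<dots> = 0" using assms by simp
  finally have h: "(1 - w^2)*(a1 - a3 + t*a4 - t*a6) = 0" .
  have "w^2 \<noteq> 1"
  proof
    assume "w^2 = 1"
    hence "w ^ 3 = w" by (simp add: power3_eq_cube power2_eq_square)
    thus False using assms(1,2) by simp
  qed
  thus ?thesis using h by simp
qed

lemma T_rep_rels:
  assumes "T_rep \<omega> t m A"
  defines "X \<equiv> opm m (A 0)" and "Y \<equiv> opm m (A 1)" and "Z \<equiv> opm m (A 2)"
  shows "X (X f) = 0" "Y (Y f) = 0" "Z (Z f) = 0"
    "Z (X (Y f)) i + \<omega> * X (Y (Z f)) i + \<omega>^2 * Y (Z (X f)) i + t * Y (X (Z f)) i
       + t * \<omega> * Z (Y (X f)) i + t * \<omega>^2 * X (Z (Y f)) i = 0"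
    "Z (X (Y f)) i + \<omega>^2 * X (Y (Z f)) i + \<omega> * Y (Z (X f)) i + t * Y (X (Z f)) i
       + t * \<omega>^2 * Z (Y (X f)) i + t * \<omega> * X (Z (Y f)) i = 0"
proof -
  have c: "A 0 \<in> carrier_mat m m" "A 1 \<in> carrier_mat m m" "A 2 \<in> carrier_mat m m"
    using assms(1) unfolding T_rep_def by auto
  have c': "A (Suc 0) \<in> carrier_mat m m" "A (Suc (Suc 0)) \<in> carrier_mat m m"
    using c by (simp_all add: numeral_2_eq_2)
  have key: "opm m (nc_eval m A r) f = 0" if "r \<in> set (T_rels \<omega> t)" for r
    using assms(1) that unfolding T_rep_def by (simp add: opm_zero)
  show "X (X f) = 0" using key[of "[(1, [0,0])]"]
    by (simp add: T_rels_def S_rels_def opm_nc opm_word c c' X_def)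
  show "Y (Y f) = 0" using key[of "[(1, [1,1])]"]
    by (simp add: T_rels_def S_rels_def opm_nc opm_word c c' Y_def)
  show "Z (Z f) = 0" using key[of "[(1, [2,2])]"]
    by (simp add: T_rels_def S_rels_def opm_nc opm_word c c' Z_def)
  have h1: "opm m (nc_eval m A (T_rel1 \<omega> t)) f = 0" using key by (simp add: T_rels_def)
  show "Z (X (Y f)) i + \<omega> * X (Y (Z f)) i + \<omega>^2 * Y (Z (X f)) i + t * Y (X (Z f)) i
       + t * \<omega> * Z (Y (X f)) i + t * \<omega>^2 * X (Z (Y f)) i = 0"
    using fun_cong[OF h1, of i]
    by (simp add: T_rel1_def opm_nc opm_word c c' X_def Y_def Z_def scl_apply add.assoc)
  have h2: "opm m (nc_eval m A (T_rel2 \<omega> t)) f = 0" using key by (simp add: T_rels_def)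
  show "Z (X (Y f)) i + \<omega>^2 * X (Y (Z f)) i + \<omega> * Y (Z (X f)) i + t * Y (X (Z f)) i
       + t * \<omega>^2 * Z (Y (X f)) i + t * \<omega> * X (Z (Y f)) i = 0"
    using fun_cong[OF h2, of i]
    by (simp add: T_rel2_def opm_nc opm_word c c' X_def Y_def Z_def scl_apply add.assoc)
qed

lemma upper_bound:
  fixes \<omega> \<zeta> :: complex
  assumes w: "\<omega> ^ 3 = 1" "\<omega> \<noteq> 1" and n: "n \<ge> 2" and z: "\<zeta> ^ n = 1" "\<forall>k. 0 < k \<and> k < n \<longrightarrow> \<zeta> ^ k \<noteq> 1"
    and rep: "T_rep \<omega> (- \<zeta>) m A" and sim: "simple_rep m A"
  shows "m \<le> 2 * n"
proof -
  let ?X = "opm m (A 0)" and ?Y = "opm m (A 1)" and ?Z = "opm m (A 2)"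
  note E = T_rep_rels[OF rep]
  have c: "\<forall>i<3. A i \<in> carrier_mat m m" using rep unfolding T_rep_def by auto
  have mpos: "0 < m" using sim unfolding simple_rep_def by auto
  interpret trirep m n \<zeta> ?X ?Y ?Z
  proof
    show "linop ?X" "linop ?Y" "linop ?Z" by (rule opm_lin)+
    show "\<And>f. ?X f \<in> Fm m" "\<And>f. ?Y f \<in> Fm m" "\<And>f. ?Z f \<in> Fm m" by (rule opm_Fm)+
    show "\<And>f. ?X (?X f) = 0" "\<And>f. ?Y (?Y f) = 0" "\<And>f. ?Z (?Z f) = 0" by (rule E)+
    show "\<And>f. ?Z (?X (?Y f) + scl \<zeta> (?Y (?X f))) = ?X (?Y (?Z f)) + scl \<zeta> (?Y (?X (?Z f)))"
    proof (rule ext)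
      fix f i
      have "?Z (?X (?Y f)) i - ?X (?Y (?Z f)) i + (- \<zeta>) * ?Y (?X (?Z f)) i - (- \<zeta>) * ?Z (?Y (?X f)) i = 0"
        by (rule rz_alg[OF w E(4) E(5)])
      thus "?Z (?X (?Y f) + scl \<zeta> (?Y (?X f))) i = (?X (?Y (?Z f)) + scl \<zeta> (?Y (?X (?Z f)))) i"
        by (simp add: opm_add_fun opm_scl_fun scl_apply algebra_simps)
    qed
    show "\<And>f. ?X (?Y (?Z f) + scl \<zeta> (?Z (?Y f))) = ?Y (?Z (?X f)) + scl \<zeta> (?Z (?Y (?X f)))"
    proof (rule ext)
      fix f i
      have "?X (?Y (?Z f)) i - ?Y (?Z (?X f)) i + (- \<zeta>) * ?Z (?Y (?X f)) i - (- \<zeta>) * ?X (?Z (?Y f)) i = 0"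
        by (rule rx_alg[OF w E(4) E(5)])
      thus "?X (?Y (?Z f) + scl \<zeta> (?Z (?Y f))) i = (?Y (?Z (?X f)) + scl \<zeta> (?Z (?Y (?X f)))) i"
        by (simp add: opm_add_fun opm_scl_fun scl_apply algebra_simps)
    qed
    show "\<And>f. ?Y (?Z (?X f) + scl \<zeta> (?X (?Z f))) = ?Z (?X (?Y f)) + scl \<zeta> (?X (?Z (?Y f)))"
    proof (rule ext)
      fix f i
      have "?Z (?X (?Y f)) i - ?Y (?Z (?X f)) i + (- \<zeta>) * ?Y (?X (?Z f)) i - (- \<zeta>) * ?X (?Z (?Y f)) i = 0"
        by (rule ry_alg[OF w E(4) E(5)])
      thus "?Y (?Z (?X f) + scl \<zeta> (?X (?Z f))) i = (?Z (?X (?Y f)) + scl \<zeta> (?X (?Z (?Y f)))) i"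
        by (simp add: opm_add_fun opm_scl_fun scl_apply algebra_simps)
    qed
    show "\<zeta> ^ n = 1" by (rule z(1))
    show "\<And>k. 0 < k \<Longrightarrow> k < n \<Longrightarrow> \<zeta> ^ k \<noteq> 1" using z(2) by blast
    show "0 < n" using n by simp
    show "0 < m" by (rule mpos)
    show "\<And>W. subsp m W \<Longrightarrow> \<forall>f\<in>W. ?X f \<in> W \<and> ?Y f \<in> W \<and> ?Z f \<in> W \<Longrightarrow> W = {0} \<or> W = Fm m"
      by (rule simple_transfer[OF sim c])
    show "\<And>C. linop C \<Longrightarrow> (\<And>f. C f \<in> Fm m) \<Longrightarrow> \<exists>c g. g \<in> Fm m \<and> g \<noteq> 0 \<and> C g = scl c g"
      by (rule eig_exists[OF mpos])
    show "\<And>gs. \<forall>f\<in>Fm m. \<exists>c. f = lc c gs \<Longrightarrow> m \<le> length gs" by (rule dim_bound)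
  qed
  show ?thesis by (rule bound)
qed


declare scl_apply[simp del]

definition Xm :: "nat \<Rightarrow> complex \<Rightarrow> complex mat" where
  "Xm n z = mat (2*n) (2*n) (\<lambda>(i,j). if i < n \<and> j = n + i then z ^ i else 0)"
definition Ym :: "nat \<Rightarrow> complex mat" where
  "Ym n = mat (2*n) (2*n) (\<lambda>(i,j). if n \<le> i \<and> j + n = i then 1 else 0)"
definition Zm :: "nat \<Rightarrow> complex mat" where
  "Zm n = mat (2*n) (2*n) (\<lambda>(i,j). if i < n \<and> j = n + (i + n - 1) mod n then 1 else 0)"
definition Arep :: "nat \<Rightarrow> complex \<Rightarrow> nat \<Rightarrow> complex mat" where
  "Arep n z i = (if i = 0 then Xm n z else if i = 1 then Ym n else if i = 2 then Zm n else 0\<^sub>m (2*n) (2*n))"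

lemma Arep_carrier: "Arep n z i \<in> carrier_mat (2*n) (2*n)"
  by (simp add: Arep_def Xm_def Ym_def Zm_def)

lemma sum_delta_nat:
  fixes c :: complex and a bn :: nat
  assumes "a < bn" shows "(\<Sum>j<bn. if j = a then c else 0) = c"
  using assms by (simp add: sum.delta)

lemma opX: "opm (2*n) (Xm n z) f = (\<lambda>i. if i < n then z ^ i * f (n + i) else 0)"
proof (rule ext)
  fix i show "opm (2*n) (Xm n z) f i = (if i < n then z ^ i * f (n + i) else 0)"
  proof (cases "i < n")
    case True
    have "opm (2*n) (Xm n z) f i = (\<Sum>j<2*n. (if i < n \<and> j = n + i then z ^ i else 0) * f j)"
      using True unfolding opm_def by (simp add: Xm_def)
    also have "\<dots> = (\<Sum>j<2*n. if j = n + i then z ^ i * f (n + i) else 0)"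
      using True by (intro sum.cong) auto
    also have "\<dots> = z ^ i * f (n + i)" using True by (intro sum_delta_nat) simp
    finally show ?thesis using True by simp
  next
    case False thus ?thesis by (auto simp: opm_def Xm_def)
  qed
qed

lemma opY: "opm (2*n) (Ym n) f = (\<lambda>i. if n \<le> i \<and> i < 2*n then f (i - n) else 0)"
proof (rule ext)
  fix i show "opm (2*n) (Ym n) f i = (if n \<le> i \<and> i < 2*n then f (i - n) else 0)"
  proof (cases "n \<le> i \<and> i < 2*n")
    case True
    have "opm (2*n) (Ym n) f i = (\<Sum>j<2*n. (if n \<le> i \<and> j + n = i then 1 else 0) * f j)"
      using True unfolding opm_def by (simp add: Ym_def)
    also have "\<dots> = (\<Sum>j<2*n. if j = i - n then f (i - n) else 0)"
      using True by (intro sum.cong) auto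
    also have "\<dots> = f (i - n)" using True by (intro sum_delta_nat) arith
    finally show ?thesis using True by simp
  next
    case False thus ?thesis by (auto simp: opm_def Ym_def intro!: sum.neutral)
  qed
qed

lemma opZ: "0 < n \<Longrightarrow> opm (2*n) (Zm n) f = (\<lambda>i. if i < n then f (n + (i + n - 1) mod n) else 0)"
proof (rule ext)
  fix i assume n: "0 < n"
  show "opm (2*n) (Zm n) f i = (if i < n then f (n + (i + n - 1) mod n) else 0)"
  proof (cases "i < n")
    case True
    have "opm (2*n) (Zm n) f i = (\<Sum>j<2*n. (if i < n \<and> j = n + (i + n - 1) mod n then 1 else 0) * f j)"
      using True unfolding opm_def by (simp add: Zm_def)
    also have "\<dots> = (\<Sum>j<2*n. if j = n + (i + n - 1) mod n then f (n + (i + n - 1) mod n) else 0)"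
      using True by (intro sum.cong) auto
    also have "\<dots> = f (n + (i + n - 1) mod n)" using n by (intro sum_delta_nat) simp
    finally show ?thesis using True by simp
  next
    case False thus ?thesis by (auto simp: opm_def Zm_def)
  qed
qed

lemma pow_mod_eq: "(z::complex) ^ n = 1 \<Longrightarrow> z ^ (k mod n) = z ^ k"
proof -
  assume z: "z ^ n = 1"
  have "z ^ k = z ^ (n * (k div n) + k mod n)" by simp
  also have "\<dots> = (z ^ n) ^ (k div n) * z ^ (k mod n)" by (simp only: power_add power_mult)
  finally show ?thesis using z by simp
qed

lemma shift_pow: "(z::complex) ^ n = 1 \<Longrightarrow> i < n \<Longrightarrow> z * z ^ ((i + n - 1) mod n) = z ^ i"
proof -
  assume z: "z ^ n = 1" and i: "i < n"
  have "z * z ^ ((i + n - 1) mod n) = z * z ^ (i + n - 1)" using pow_mod_eq[OF z] by simp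
  also have "\<dots> = z ^ (i + n)" using i by (simp flip: power_Suc)
  also have "\<dots> = z ^ i" using z by (simp add: power_add)
  finally show ?thesis .
qed

lemma rep_exists:
  fixes \<omega> \<zeta> :: complex
  assumes n: "0 < n" and z: "\<zeta> ^ n = 1"
  shows "T_rep \<omega> (- \<zeta>) (2*n) (Arep n \<zeta>)"
proof -
  define X where "X = opm (2*n) (Arep n \<zeta> 0)"
  define Y where "Y = opm (2*n) (Arep n \<zeta> 1)"
  define Z where "Z = opm (2*n) (Arep n \<zeta> 2)"
  have Xe: "X f = (\<lambda>i. if i < n then \<zeta> ^ i * f (n + i) else 0)" for f
    by (simp add: X_def Arep_def opX)
  have Ye: "Y f = (\<lambda>i. if n \<le> i \<and> i < 2*n then f (i - n) else 0)" for f
    by (simp add: Y_def Arep_def opY)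
  have Ze: "Z f = (\<lambda>i. if i < n then f (n + (i + n - 1) mod n) else 0)" for f
    by (simp add: Z_def Arep_def opZ[OF n])
  have smod: "(i + n - 1) mod n < n" for i using n by simp
  have XX: "X (X f) = 0" for f by (simp add: Xe fun_eq_iff)
  have YY: "Y (Y f) = 0" for f by (rule ext) (auto simp: Ye)
  have ZZ: "Z (Z f) = 0" for f by (simp add: Ze fun_eq_iff)
  have ZX: "Z (X f) = 0" for f by (simp add: Ze Xe fun_eq_iff)
  have XZ: "X (Z f) = 0" for f by (simp add: Ze Xe fun_eq_iff)
  have X0: "X 0 = 0" "Y 0 = 0" "Z 0 = 0" by (simp_all add: Xe Ye Ze fun_eq_iff)
  have XYZ_ZYX: "X (Y (Z f)) = scl \<zeta> (Z (Y (X f)))" for f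
  proof (rule ext)
    fix i
    show "X (Y (Z f)) i = scl \<zeta> (Z (Y (X f))) i"
    proof (cases "i < n")
      case True
      have "\<zeta> ^ i = \<zeta> * \<zeta> ^ ((i + n - 1) mod n)" using shift_pow[OF z True] by simp
      thus ?thesis using True by (simp add: Xe Ye Ze smod scl_apply)
    next
      case False thus ?thesis by (simp add: Xe Ye Ze scl_apply)
    qed
  qed
  have carr: "\<forall>i. Arep n \<zeta> i \<in> carrier_mat (2*n) (2*n)" by (simp add: Arep_carrier)
  have c0: "\<And>p. \<forall>x\<in>set p. \<forall>i\<in>set (snd x). Arep n \<zeta> i \<in> carrier_mat (2*n) (2*n)" using carr by blast
  have zero: "nc_eval (2*n) (Arep n \<zeta>) r = 0\<^sub>m (2*n) (2*n)" if "\<And>f. opm (2*n) (nc_eval (2*n) (Arep n \<zeta>) r) f = 0" for r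
    by (rule opm_zero_mat[OF nc_eval_carrier[OF c0] that])
  have fw: "opm (2*n) (word_eval (2*n) (Arep n \<zeta>) w) f = foldr (\<lambda>i g. opm (2*n) (Arep n \<zeta> i) g) w f"
    if wne: "w \<noteq> []" for w f
  proof -
    obtain a w' where w: "w = a # w'" using wne by (cases w) auto
    have "opm (2*n) (word_eval (2*n) (Arep n \<zeta>) w) f = foldr (\<lambda>i g. opm (2*n) (Arep n \<zeta> i) g) w (restr (2*n) f)"
      using carr by (intro opm_word) auto
    also have "\<dots> = foldr (\<lambda>i g. opm (2*n) (Arep n \<zeta> i) g) w f"
      unfolding w by (induct w' arbitrary: a) auto
    finally show ?thesis .
  qed
  have oX: "opm (2*n) (Arep n \<zeta> 0) = X" by (simp add: X_def)
  have oY: "opm (2*n) (Arep n \<zeta> 1) = Y" "opm (2*n) (Arep n \<zeta> (Suc 0)) = Y" by (simp_all add: Y_def)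
  have oZ: "opm (2*n) (Arep n \<zeta> 2) = Z" "opm (2*n) (Arep n \<zeta> (Suc (Suc 0))) = Z"
    by (simp_all add: Z_def numeral_2_eq_2)
  have sc: "scl a (scl b g) + scl c g = scl (a * b + c) g" for a b c g
    by (simp add: fun_eq_iff scl_apply algebra_simps)
  have sc3: "scl (a * b) g + scl (- (b * a)) g = 0" for a b g
    by (simp add: fun_eq_iff scl_apply)
  show ?thesis unfolding T_rep_def
  proof (intro conjI allI impI ballI)
    fix i :: nat assume "i < 3" thus "Arep n \<zeta> i \<in> carrier_mat (2*n) (2*n)" by (simp add: Arep_carrier)
  next
    fix r assume r: "r \<in> set (T_rels \<omega> (- \<zeta>))"
    have ne: "\<forall>x\<in>set r. snd x \<noteq> []" using r by (auto simp: T_rels_def S_rels_def T_rel1_def T_rel2_def)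
    have cases: "r = [(1, [0,0])] \<or> r = [(1, [1,1])] \<or> r = [(1, [2,2])] \<or> r = T_rel1 \<omega> (- \<zeta>) \<or> r = T_rel2 \<omega> (- \<zeta>)"
      using r by (auto simp: T_rels_def S_rels_def)
    show "nc_eval (2*n) (Arep n \<zeta>) r = 0\<^sub>m (2*n) (2*n)"
    proof (rule zero)
      fix f
      show "opm (2*n) (nc_eval (2*n) (Arep n \<zeta>) r) f = 0"
        using cases
        by (elim disjE) (simp_all add: opm_nc[OF c0] fw T_rel1_def T_rel2_def oX oY oZ XX YY ZZ ZX XZ X0
            XYZ_ZYX sc sc3)
    qed
  qed
qed


declare scl_apply[simp del]

lemma subsp_sum: "subsp m W \<Longrightarrow> (\<And>k. k \<in> S \<Longrightarrow> h k \<in> W) \<Longrightarrow> (\<Sum>k\<in>S. h k) \<in> W"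
  by (induct S rule: infinite_finite_induct) (auto simp: subsp_def)

lemma shift_val: "0 < (n::nat) \<Longrightarrow> b < n \<Longrightarrow> (b + n - 1) mod n = (if b = 0 then n - 1 else b - 1)"
proof -
  assume n: "0 < n" and b: "b < n"
  show ?thesis
  proof (cases "b = 0")
    case True
    have "b + n - 1 = n - 1" using True by simp
    moreover have "(n - 1) mod n = n - 1" using n by (intro mod_less) simp
    ultimately show ?thesis using True by simp
  next
    case False
    hence "b + n - 1 = (b - 1) + n" by simp
    hence "(b + n - 1) mod n = (b - 1) mod n" by simp
    thus ?thesis using False b by simp
  qed
qed

lemma succ_val: "(a::nat) < n \<Longrightarrow> (a + 1) mod n = (if a + 1 = n then 0 else a + 1)"
  by auto

lemma shift_iff: "0 < (n::nat) \<Longrightarrow> a < n \<Longrightarrow> b < n \<Longrightarrow> ((b + n - 1) mod n = a) = (b = (a + 1) mod n)"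
proof -
  assume n: "0 < n" and a: "a < n" and b: "b < n"
  have s: "(b + n - 1) mod n = (if b = 0 then n - 1 else b - 1)" by (rule shift_val[OF n b])
  have t: "(a + 1) mod n = (if a + 1 = n then 0 else a + 1)" by (rule succ_val[OF a])
  show ?thesis unfolding s t using a b n by auto
qed

lemma irr:
  fixes \<zeta> :: complex
  assumes n: "0 < n" and z: "\<zeta> ^ n = 1" and prim: "\<And>k. 0 < k \<Longrightarrow> k < n \<Longrightarrow> \<zeta> ^ k \<noteq> 1"
    and W: "subsp (2*n) W"
    and inv: "\<forall>f\<in>W. opm (2*n) (Arep n \<zeta> 0) f \<in> W \<and> opm (2*n) (Arep n \<zeta> 1) f \<in> W \<and> opm (2*n) (Arep n \<zeta> 2) f \<in> W"
    and f: "f \<in> W" "f \<noteq> 0"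
  shows "Fm (2*n) \<subseteq> W"
proof -
  define X where "X = opm (2*n) (Arep n \<zeta> 0)"
  define Y where "Y = opm (2*n) (Arep n \<zeta> 1)"
  define Z where "Z = opm (2*n) (Arep n \<zeta> 2)"
  have Xe: "X h = (\<lambda>i. if i < n then \<zeta> ^ i * h (n + i) else 0)" for h
    by (simp add: X_def Arep_def opX)
  have Ye: "Y h = (\<lambda>i. if n \<le> i \<and> i < 2*n then h (i - n) else 0)" for h
    by (simp add: Y_def Arep_def opY)
  have Ze: "Z h = (\<lambda>i. if i < n then h (n + (i + n - 1) mod n) else 0)" for h
    by (simp add: Z_def Arep_def opZ[OF n])
  have WX: "X h \<in> W" "Y h \<in> W" "Z h \<in> W" if "h \<in> W" for h using inv that by (auto simp: X_def Y_def Z_def)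
  have WF: "h \<in> Fm (2*n)" if "h \<in> W" for h using W that by (auto simp: subsp_def)
  have Wscl: "scl c h \<in> W" if "h \<in> W" for c h using W that by (auto simp: subsp_def)
  have znz: "\<zeta> \<noteq> 0" using z n by (metis power_0_left not_gr0 zero_neq_one)
  obtain g where g: "g \<in> W" "g \<noteq> 0" "\<And>k. k < n \<Longrightarrow> g k = 0"
  proof (cases "\<exists>i<n. f i \<noteq> 0")
    case True
    then obtain i where i: "i < n" "f i \<noteq> 0" by blast
    have "Y f (n + i) = f i" using i by (simp add: Ye)
    hence "Y f \<noteq> 0"
    proof (intro notI)
      assume a: "Y f (n + i) = f i" and "Y f = 0"
      hence "f i = 0" by simp
      thus False using i by simp
    qed
    moreover have "\<And>k. k < n \<Longrightarrow> Y f k = 0" by (simp add: Ye)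
    ultimately show ?thesis using that WX(2)[OF f(1)] by blast
  next
    case False thus ?thesis using that f by auto
  qed
  have gF: "g \<in> Fm (2*n)" using WF g(1) .
  obtain j where j: "j < n" "g (n + j) \<noteq> 0"
  proof -
    have "\<exists>k. g k \<noteq> 0" using g(2) by (auto simp: fun_eq_iff)
    then obtain k where k: "g k \<noteq> 0" by blast
    have "n \<le> k" using k g(3) by (meson not_less)
    moreover have "k < 2*n"
    proof (rule ccontr)
      assume "\<not> k < 2*n"
      hence "g k = 0" using gF unfolding Fm_def by simp
      thus False using k by simp
    qed
    ultimately show ?thesis using that[of "k - n"] k by auto
  qed
  have gout: "g k = 0" if "\<not> (n \<le> k \<and> k < 2*n)" for k
    using that g(3) gF by (auto simp: Fm_def)
  define h where "h p = (\<lambda>k. \<zeta> ^ (p * (k - n)) * g k)" for p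
  have hW: "h p \<in> W" for p
  proof (induct p)
    case 0
    have "h 0 = g" by (simp add: h_def)
    thus ?case using g(1) by simp
  next
    case (Suc p)
    have "Y (X (h p)) = h (Suc p)"
    proof (rule ext)
      fix k show "Y (X (h p)) k = h (Suc p) k"
      proof (cases "n \<le> k \<and> k < 2*n")
        case True
        hence "n + (k - n) = k" "k - n < n" by auto
        thus ?thesis using True by (simp add: Xe Ye h_def power_add)
      next
        case False thus ?thesis by (auto simp: Ye h_def gout)
      qed
    qed
    thus ?case using WX(1,2) Suc by metis
  qed
  define e where "e = (\<Sum>p<n. scl (\<zeta> ^ ((n - j) * p)) (h p))"
  have eW: "e \<in> W" unfolding e_def using W by (intro subsp_sum) (auto intro: Wscl hW)
  have e_eq: "e = scl (of_nat n * g (n + j)) (ej (n + j))"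
  proof (rule ext)
    fix k
    have "e k = (\<Sum>p<n. \<zeta> ^ ((n - j) * p) * (\<zeta> ^ (p * (k - n)) * g k))"
      by (simp add: e_def h_def fsum_apply scl_apply)
    also have "\<dots> = (\<Sum>p<n. g k * \<zeta> ^ ((n - j + (k - n)) * p))"
      by (rule sum.cong) (simp_all add: add_mult_distrib add_mult_distrib2 power_add mult_ac)
    also have "\<dots> = g k * (\<Sum>p<n. \<zeta> ^ ((n - j + (k - n)) * p))" by (simp add: sum_distrib_left)
    finally have ek: "e k = g k * (\<Sum>p<n. \<zeta> ^ ((n - j + (k - n)) * p))" .
    show "e k = scl (of_nat n * g (n + j)) (ej (n + j)) k"
    proof (cases "n \<le> k \<and> k < 2*n")
      case False thus ?thesis using ek gout[OF False] by (auto simp: scl_apply ej_def)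
    next
      case True
      define d where "d = n - j + (k - n)"
      have d: "0 < d" "d < 2 * n" using True j by (auto simp: d_def)
      have "(n dvd d) = (d = n)"
      proof
        assume "n dvd d"
        then obtain q where q: "d = n * q" by auto
        have "q \<noteq> 0" using d q by auto
        moreover have "q < 2"
        proof -
          have "n * q < n * 2" using d(2) q by (simp add: mult.commute)
          thus ?thesis using n by simp
        qed
        ultimately have "q = 1" by arith
        thus "d = n" using q by simp
      qed auto
      moreover have "(d = n) = (k = n + j)" using True j by (auto simp: d_def)
      ultimately have "(\<Sum>p<n. \<zeta> ^ (d * p)) = (if k = n + j then of_nat n else 0)"
        using root_sum[OF z prim n, of d] by simp
      thus ?thesis using ek by (auto simp: scl_apply ej_def d_def)
    qed
  qed
  have e1: "ej (n + j) \<in> W"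
  proof -
    have "(of_nat n * g (n + j) :: complex) \<noteq> 0" using j(2) n by simp
    hence "ej (n + j) = scl (inverse (of_nat n * g (n + j))) e"
      using scl_solve[OF e_eq[symmetric]] by blast
    thus ?thesis using Wscl eW by metis
  qed
  have step: "Y (Z (ej (n + a))) = ej (n + (a + 1) mod n)" if a: "a < n" for a
  proof (rule ext)
    fix k show "Y (Z (ej (n + a))) k = ej (n + (a + 1) mod n) k"
    proof (cases "n \<le> k \<and> k < 2*n")
      case True
      hence kn: "k - n < n" by auto
      have "((k - n + n - 1) mod n = a) = (k - n = (a + 1) mod n)" by (rule shift_iff[OF n a kn])
      moreover have "(k - n = (a + 1) mod n) = (k = n + (a + 1) mod n)" using True by auto
      ultimately show ?thesis using True kn by (simp add: Ye Ze ej_def)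
    next
      case False
      moreover have "(a + 1) mod n < n" using n by simp
      ultimately show ?thesis by (auto simp: Ye ej_def)
    qed
  qed
  have allb: "ej (n + (j + q) mod n) \<in> W" for q
  proof (induct q)
    case 0 thus ?case using e1 j by simp
  next
    case (Suc q)
    have "(j + q) mod n < n" using n by simp
    hence "Y (Z (ej (n + (j + q) mod n))) = ej (n + ((j + q) mod n + 1) mod n)" by (rule step)
    also have "((j + q) mod n + 1) mod n = (j + Suc q) mod n" by (simp add: mod_Suc_eq)
    finally show ?case using WX Suc by metis
  qed
  have bW: "ej (n + b) \<in> W" if "b < n" for b
  proof -
    have "(j + (b + n - j)) mod n = b" using that j by simp
    thus ?thesis using allb[of "b + n - j"] by simp
  qed
  have aW: "ej b \<in> W" if b: "b < n" for b
  proof -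
    have "X (ej (n + b)) = scl (\<zeta> ^ b) (ej b)"
      using b by (auto simp: Xe ej_def scl_apply fun_eq_iff)
    hence "ej b = scl (inverse (\<zeta> ^ b)) (X (ej (n + b)))" using znz by (simp add: fun_eq_iff scl_apply)
    thus ?thesis using Wscl WX(1)[OF bW[OF b]] by metis
  qed
  show ?thesis
  proof
    fix u assume u: "u \<in> Fm (2*n)"
    have "u = (\<Sum>k<2*n. scl (u k) (ej k))" by (rule Fm_decomp[OF u])
    also have "\<dots> \<in> W"
    proof (rule subsp_sum[OF W])
      fix k assume "k \<in> {..<2*n}"
      hence "k < n \<or> (n \<le> k \<and> k - n < n)" by auto
      hence "ej k \<in> W" using aW bW by (metis le_add_diff_inverse)
      thus "scl (u k) (ej k) \<in> W" by (rule Wscl)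
    qed
    finally show "u \<in> W" .
  qed
qed

lemma rep_simple:
  fixes \<zeta> :: complex
  assumes n: "0 < n" and z: "\<zeta> ^ n = 1" and prim: "\<And>k. 0 < k \<Longrightarrow> k < n \<Longrightarrow> \<zeta> ^ k \<noteq> 1"
  shows "simple_rep (2*n) (Arep n \<zeta>)"
  unfolding simple_rep_def
proof (intro conjI allI impI)
  show "0 < 2 * n" using n by simp
  fix V assume V: "is_subspace (2*n) V \<and> (\<forall>i<3. \<forall>v\<in>V. Arep n \<zeta> i *\<^sub>v v \<in> V)"
  define W where "W = {f \<in> Fm (2*n). vec (2*n) f \<in> V}"
  have V0: "0\<^sub>v (2*n) \<in> V" and Vc: "V \<subseteq> carrier_vec (2*n)"
    and Vadd: "\<And>u v. u \<in> V \<Longrightarrow> v \<in> V \<Longrightarrow> u + v \<in> V" and Vscl: "\<And>c u. u \<in> V \<Longrightarrow> c \<cdot>\<^sub>v u \<in> V"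
    using V unfolding is_subspace_def by auto
  have vec0: "vec (2*n) 0 = (0\<^sub>v (2*n) :: complex vec)" by (rule eq_vecI) auto
  have "subsp (2*n) W" unfolding subsp_def W_def
  proof (intro conjI ballI allI)
    show "{f \<in> Fm (2 * n). vec (2 * n) f \<in> V} \<subseteq> Fm (2 * n)" by auto
    show "0 \<in> {f \<in> Fm (2 * n). vec (2 * n) f \<in> V}" using V0 vec0 by simp
  next
    fix f g assume "f \<in> {f \<in> Fm (2 * n). vec (2 * n) f \<in> V}" "g \<in> {f \<in> Fm (2 * n). vec (2 * n) f \<in> V}"
    moreover have "vec (2*n) (f + g) = vec (2*n) f + vec (2*n) g" by (rule eq_vecI) auto
    ultimately show "f + g \<in> {f \<in> Fm (2 * n). vec (2 * n) f \<in> V}" using Vadd by (auto intro: Fm_add)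
  next
    fix c f assume "f \<in> {f \<in> Fm (2 * n). vec (2 * n) f \<in> V}"
    moreover have "vec (2*n) (scl c f) = c \<cdot>\<^sub>v vec (2*n) f" by (rule eq_vecI) (auto simp: scl_apply)
    ultimately show "scl c f \<in> {f \<in> Fm (2 * n). vec (2 * n) f \<in> V}" using Vscl by (auto intro: Fm_scl)
  qed
  moreover have "\<forall>f\<in>W. opm (2*n) (Arep n \<zeta> 0) f \<in> W \<and> opm (2*n) (Arep n \<zeta> 1) f \<in> W \<and> opm (2*n) (Arep n \<zeta> 2) f \<in> W"
  proof
    fix f assume f: "f \<in> W"
    have "opm (2*n) (Arep n \<zeta> i) f \<in> W" if "i < 3" for i
    proof -
      have "vec (2*n) (opm (2*n) (Arep n \<zeta> i) f) = Arep n \<zeta> i *\<^sub>v vec (2*n) f"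
        by (rule mult_vec_opm[symmetric, OF Arep_carrier])
      also have "\<dots> \<in> V" using V that f unfolding W_def by auto
      finally show ?thesis unfolding W_def by (simp add: opm_Fm)
    qed
    thus "opm (2*n) (Arep n \<zeta> 0) f \<in> W \<and> opm (2*n) (Arep n \<zeta> 1) f \<in> W \<and> opm (2*n) (Arep n \<zeta> 2) f \<in> W"
      by simp
  qed
  ultimately have irrW: "f \<in> W \<Longrightarrow> f \<noteq> 0 \<Longrightarrow> Fm (2*n) \<subseteq> W" for f
    using irr[OF n z prim] by blast
  show "V = {0\<^sub>v (2*n)} \<or> V = carrier_vec (2*n)"
  proof (cases "V \<subseteq> {0\<^sub>v (2*n)}")
    case True thus ?thesis using V0 by auto
  next
    case False
    then obtain u where u: "u \<in> V" "u \<noteq> 0\<^sub>v (2*n)" by auto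
    have uc: "u \<in> carrier_vec (2*n)" using u Vc by auto
    define f where "f = (\<lambda>i. if i < 2*n then u $ i else 0)"
    have vf: "vec (2*n) f = u" using uc by (intro eq_vecI) (auto simp: f_def)
    have fW: "f \<in> W" unfolding W_def using vf u by (auto simp: Fm_def f_def)
    have "f \<noteq> 0"
    proof
      assume "f = 0" thus False using vf vec0 u by simp
    qed
    hence FW: "Fm (2*n) \<subseteq> W" using irrW fW by blast
    have "carrier_vec (2*n) \<subseteq> V"
    proof
      fix x :: "complex vec" assume x: "x \<in> carrier_vec (2*n)"
      define g where "g = (\<lambda>i. if i < 2*n then x $ i else 0)"
      have "g \<in> Fm (2*n)" by (auto simp: Fm_def g_def)
      hence "vec (2*n) g \<in> V" using FW unfolding W_def by auto
      moreover have "vec (2*n) g = x" using x by (intro eq_vecI) (auto simp: g_def)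
      ultimately show "x \<in> V" by simp
    qed
    thus ?thesis using Vc by auto
  qed
qed

theorem mainTheorem4:
  fixes \<omega> \<zeta> :: complex and n :: nat
  assumes "\<omega> ^ 3 = 1" and "\<omega> \<noteq> 1"
    and "n \<ge> 2"
    and "\<zeta> ^ n = 1" and "\<forall>k. 0 < k \<and> k < n \<longrightarrow> \<zeta> ^ k \<noteq> 1"
  shows "T_PI_degree \<omega> (- \<zeta>) = 2 * n"
proof -
  have n: "0 < n" using assms(3) by simp
  have prim: "\<And>k. 0 < k \<Longrightarrow> k < n \<Longrightarrow> \<zeta> ^ k \<noteq> 1" using assms(5) by blast
  have "\<exists>A. T_rep \<omega> (- \<zeta>) (2*n) A \<and> simple_rep (2*n) A"
    using rep_exists[OF n assms(4)] rep_simple[OF n assms(4) prim] by blast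
  moreover have "m \<le> 2 * n" if "\<exists>A. T_rep \<omega> (- \<zeta>) m A \<and> simple_rep m A" for m
    using that upper_bound[OF assms(1-5)] by blast
  ultimately show ?thesis unfolding T_PI_degree_def by (rule Greatest_equality)
qed


end
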